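(* Let $\mathcal{M}=(S,P,E,s_{init},L)$ be a CTMC with absorbing goal state $g$ and reward function $\rho\colon S\to\mathbb{R}_{>0}$ (all rewards positive). Let $\varepsilon,\delta\geq0$, let $s,s'\in S$ with $s\sim_{\varepsilon,\delta}s'$, let $r\geq0$, and let $\widehat{q}\geq\max_{p\in S}\widehat{E}(p)$ where $\widehat{E}(p)=E(p)/\rho(p)$. Then $$\left|\mathrm{Pr}_s(\lozenge_{\leq r}g)-\mathrm{Pr}_{s'}(\lozenge_{\leq r}g)\right|\leq 1-e^{-\widehat{q}\, r\,(e^{\delta}(\varepsilon+1)-1)}.$$
   Context: A CTMC $(S,P,E,s_{init},L)$: finite $S$, $P\colon S\to\mathrm{Distr}(S)$ ($P(s,A)=\sum_{a\in A}P(s,a)$), $E\colon S\to\mathbb{R}_{>0}$, initial state, labeling $L$. A timed path is $\sigma=s_0t_0s_1t_1\dots$ with $t_i>0$ the residence time in $s_i$ (exponential with rate $E(s_i)$, next state $s_{i+1}$ drawn with probability $P(s_i,s_{i+1})$). $\sigma@t=s_m$ for $m$ the smallest index with $t\leq\sum_{i=0}^{m}t_i$. The cumulative reward until time $t$ is $\rho(\sigma,t)=\sum_{j=0}^{m-1}t_j\rho(s_j)+(t-\sum_{j=0}^{m-1}t_j)\rho(s_m)$ where $\sigma@t=s_m$. $\mathrm{Pr}_s(\lozenge_{\leq r}g)$ is the probability that the CTMC started in $s$ reaches $g$ while having accumulated reward at most $r$. For $R\subseteq S\times S$, $R(A)=\{t\mid\exists a\in A:(a,t)\in R\}$. In the presence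 of rewards, a reflexive symmetric $R\subseteq S\times S$ is an $(\varepsilon,\delta)$-bisimulation if for all $(s,s')\in R$: $L(s)=L(s')$, $\rho(s)=\rho(s')$, $|\ln E(s)-\ln E(s')|\leq\delta$, and $P(s,A)\leq P(s',R(A))+\varepsilon$ for all $A\subseteq S$; $s\sim_{\varepsilon,\delta}s'$ if some such relation contains $(s,s')$. Standing assumption: $g$ is the unique goal state, absorbing and uniquely labeled. *)

theory Defs
  imports "HOL-Probability.Probability"
begin

text \<open>A CTMC over a finite state type 's is given by P :: 's => 's pmf (embedded
jump chain), exit rates E :: 's => real, and a labelling L.  The initial state is
irrelevant for the statement (probabilities are taken from an arbitrary start state s).

The path probability measure is constructed as follows: in each step n we draw,
independently of everything else, a random successor map f_n : 's => 's with
f_n(p) ~ P(p) independently for all p (Pi_pmf), and a family of residence times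
tau_n(p) ~ Exp(E p) independently for all p.  The timed path from s is then
s_0 = s, s_(n+1) = f_n(s_n), t_n = tau_n(s_n); this gives exactly the law of the
CTMC timed paths.\<close>

definition ctmc_step_measure ::
  "('s::finite \<Rightarrow> 's pmf) \<Rightarrow> ('s \<Rightarrow> real) \<Rightarrow> (('s \<Rightarrow> 's) \<times> ('s \<Rightarrow> real)) measure" where
  "ctmc_step_measure P E =
     pair_measure (measure_pmf (Pi_pmf UNIV undefined P))
                  (PiM UNIV (\<lambda>p. density lborel (exponential_density (E p))))"

definition ctmc_path_measure ::
  "('s::finite \<Rightarrow> 's pmf) \<Rightarrow> ('s \<Rightarrow> real) \<Rightarrow> (nat \<Rightarrow> ('s \<Rightarrow> 's) \<times> ('s \<Rightarrow> real)) measure" where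
  "ctmc_path_measure P E = PiM UNIV (\<lambda>_::nat. ctmc_step_measure P E)"

fun path_state :: "'s \<Rightarrow> (nat \<Rightarrow> ('s \<Rightarrow> 's) \<times> ('s \<Rightarrow> real)) \<Rightarrow> nat \<Rightarrow> 's" where
  "path_state s \<omega> 0 = s"
| "path_state s \<omega> (Suc n) = fst (\<omega> n) (path_state s \<omega> n)"

definition path_time :: "'s \<Rightarrow> (nat \<Rightarrow> ('s \<Rightarrow> 's) \<times> ('s \<Rightarrow> real)) \<Rightarrow> nat \<Rightarrow> real" where
  "path_time s \<omega> n = snd (\<omega> n) (path_state s \<omega> n)"

definition path_index :: "'s \<Rightarrow> (nat \<Rightarrow> ('s \<Rightarrow> 's) \<times> ('s \<Rightarrow> real)) \<Rightarrow> real \<Rightarrow> nat" where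
  "path_index s \<omega> t = (LEAST m. t \<le> (\<Sum>i\<le>m. path_time s \<omega> i))"

definition path_at :: "'s \<Rightarrow> (nat \<Rightarrow> ('s \<Rightarrow> 's) \<times> ('s \<Rightarrow> real)) \<Rightarrow> real \<Rightarrow> 's" where
  "path_at s \<omega> t = path_state s \<omega> (path_index s \<omega> t)"

definition path_reward ::
  "('s \<Rightarrow> real) \<Rightarrow> 's \<Rightarrow> (nat \<Rightarrow> ('s \<Rightarrow> 's) \<times> ('s \<Rightarrow> real)) \<Rightarrow> real \<Rightarrow> real" where
  "path_reward \<rho> s \<omega> t =
     (let m = path_index s \<omega> t in
        (\<Sum>j<m. path_time s \<omega> j * \<rho> (path_state s \<omega> j))
        + (t - (\<Sum>j<m. path_time s \<omega> j)) * \<rho> (path_state s \<omega> m))"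

text \<open>Pr_s(reach g with accumulated reward at most r).  sigma@t is only defined when
some m with t <= sum_(i<=m) t_i exists.\<close>
definition reach_reward_prob ::
  "('s::finite \<Rightarrow> 's pmf) \<Rightarrow> ('s \<Rightarrow> real) \<Rightarrow> ('s \<Rightarrow> real) \<Rightarrow> 's \<Rightarrow> real \<Rightarrow> 's \<Rightarrow> real" where
  "reach_reward_prob P E \<rho> g r s =
     measure (ctmc_path_measure P E)
       {\<omega> \<in> space (ctmc_path_measure P E).
          \<exists>t\<ge>0. (\<exists>m. t \<le> (\<Sum>i\<le>m. path_time s \<omega> i))
                 \<and> path_at s \<omega> t = g \<and> path_reward \<rho> s \<omega> t \<le> r}"

definition is_eps_delta_bisim ::
  "('s \<Rightarrow> 's pmf) \<Rightarrow> ('s \<Rightarrow> real) \<Rightarrow> ('s \<Rightarrow> 'l) \<Rightarrow> ('s \<Rightarrow> real) \<Rightarrow> real \<Rightarrow> real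
    \<Rightarrow> ('s \<times> 's) set \<Rightarrow> bool" where
  "is_eps_delta_bisim P E L \<rho> \<epsilon> \<delta> R \<longleftrightarrow>
     refl R \<and> sym R \<and>
     (\<forall>(s, s') \<in> R. L s = L s' \<and> \<rho> s = \<rho> s' \<and> \<bar>ln (E s) - ln (E s')\<bar> \<le> \<delta> \<and>
        (\<forall>A. measure_pmf.prob (P s) A \<le> measure_pmf.prob (P s') (R `` A) + \<epsilon>))"

definition eps_delta_bisimilar ::
  "('s \<Rightarrow> 's pmf) \<Rightarrow> ('s \<Rightarrow> real) \<Rightarrow> ('s \<Rightarrow> 'l) \<Rightarrow> ('s \<Rightarrow> real) \<Rightarrow> real \<Rightarrow> real
    \<Rightarrow> 's \<Rightarrow> 's \<Rightarrow> bool" where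
  "eps_delta_bisimilar P E L \<rho> \<epsilon> \<delta> s s' \<longleftrightarrow>
     (\<exists>R. is_eps_delta_bisim P E L \<rho> \<epsilon> \<delta> R \<and> (s, s') \<in> R)"

end

theory Submission
  imports Defs
begin


lemma bnd_integrable:
  fixes f :: "real \<Rightarrow> real"
  assumes [measurable]: "f \<in> borel_measurable borel" and B: "\<And>x. x \<in> {a..b} \<Longrightarrow> \<bar>f x\<bar> \<le> B"
  shows "f integrable_on {a..b}"
proof -
  have "integrable lborel (\<lambda>x. indicator {a..b} x *\<^sub>R f x)"
    by (rule integrableI_bounded_set_indicator[where B=B]) (auto simp: B emeasure_lborel_Icc_eq)
  then have "set_integrable lborel {a..b} f" by (simp add: set_integrable_def)
  then show ?thesis by (rule set_borel_integral_eq_integral(1))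
qed

lemma nn_conv:
  fixes f :: "real \<Rightarrow> real"
  assumes "\<And>x. x \<in> S \<Longrightarrow> 0 \<le> f x" "f integrable_on S"
  shows "(\<integral>\<^sup>+x. ennreal (f x) * indicator S x \<partial>lborel) = ennreal (integral S f)"
  by (rule nn_integral_has_integral_lebesgue') (use assms in auto)

lemma exp_has_integral:
  fixes k x v :: real assumes "x \<le> v"
  shows "((\<lambda>w. k * exp (k * w)) has_integral (exp (k * v) - exp (k * x))) {x..v}"
proof -
  have "((\<lambda>w. exp (k * w)) has_vector_derivative k * exp (k * w)) (at w within {x..v})" for w
    by (auto intro!: derivative_eq_intros simp: has_real_derivative_iff_has_vector_derivative[symmetric])
  then show ?thesis
    using fundamental_theorem_of_calculus[OF assms, of "\<lambda>w. exp (k * w)" "\<lambda>w. k * exp (k * w)"] by simp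
qed

lemma unif_identity:
  fixes \<Phi> :: "real \<Rightarrow> real" and a q v :: real
  assumes [measurable]: "\<Phi> \<in> borel_measurable borel"
    and \<Phi>01: "\<And>x. 0 \<le> \<Phi> x" "\<And>x. \<Phi> x \<le> 1"
    and a: "0 < a" "a \<le> q" and v: "0 \<le> v"
  shows "exp (q * v) * (a * exp (- a * v) * integral {0..v} (\<lambda>x. exp (a * x) * \<Phi> x)) =
    integral {0..v} (\<lambda>w. exp (q * w) * (a * \<Phi> w + (q - a) * (a * exp (- a * w) * integral {0..w} (\<lambda>x. exp (a * x) * \<Phi> x))))"
proof -
  define k where "k = q - a"
  have k: "0 \<le> k" using a by (simp add: k_def)
  define \<phi> where "\<phi> x = exp (a * x) * \<Phi> x" for x
  define J where "J w = integral {0..w} \<phi>" for w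
  have \<phi>m[measurable]: "\<phi> \<in> borel_measurable borel" unfolding \<phi>_def by measurable
  have \<phi>nn: "0 \<le> \<phi> x" for x using \<Phi>01 by (simp add: \<phi>_def)
  have \<phi>le: "\<phi> x \<le> exp (a * x)" for x
    unfolding \<phi>_def using \<Phi>01[of x] by (simp add: mult_left_le)
  have expmono: "exp (a * x) \<le> exp (a * w)" if "x \<le> w" for x w
    using that a by simp
  have \<phi>int: "\<phi> integrable_on {0..w}" for w
  proof (rule bnd_integrable[where B="exp (a * w)"])
    fix x assume "x \<in> {0..w}"
    then have "x \<le> w" by simp
    then have "\<phi> x \<le> exp (a * w)" by (rule order.trans[OF \<phi>le expmono])
    then show "\<bar>\<phi> x\<bar> \<le> exp (a * w)" using \<phi>nn[of x] by simp
  qed simp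
  have Jnn: "0 \<le> J w" for w unfolding J_def by (rule integral_nonneg[OF \<phi>int]) (use \<phi>nn in auto)
  have Jcont: "continuous_on {0..v} J" unfolding J_def by (rule indefinite_integral_continuous_1[OF \<phi>int])
  have int1: "(\<lambda>w. k * a * exp (k * w) * J w) integrable_on {0..v}"
    by (intro integrable_continuous_interval continuous_intros Jcont)
  have \<phi>Bd: "\<bar>\<phi> x\<bar> \<le> exp (a * v)" if "x \<in> {0..v}" for x
    using order.trans[OF \<phi>le[of x] expmono[of x v]] \<phi>nn[of x] that by simp
  have int2: "(\<lambda>x. a * \<phi> x * (exp (k * v) - exp (k * x))) integrable_on {0..v}"
  proof (rule bnd_integrable[where B="a * exp (a * v) * exp (k * v)"])
    fix x assume x: "x \<in> {0..v}"
    have "0 \<le> exp (k * v) - exp (k * x)" using x k by (simp add: mult_left_mono)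
    moreover have "exp (k * v) - exp (k * x) \<le> exp (k * v)" by simp
    ultimately have "\<bar>exp (k * v) - exp (k * x)\<bar> \<le> exp (k * v)" by simp
    then show "\<bar>a * \<phi> x * (exp (k * v) - exp (k * x))\<bar> \<le> a * exp (a * v) * exp (k * v)"
      using \<phi>Bd[OF x] a unfolding abs_mult
      by (intro mult_mono) auto
  qed simp
  let ?K = "\<lambda>(x, w). ennreal (k * a * exp (k * w) * indicator {0..v} w) * (ennreal (\<phi> x) * indicator {0..w} x)"
  let ?K' = "\<lambda>(x, w). ennreal (a * \<phi> x * indicator {0..v} x) * (ennreal (k * exp (k * w)) * indicator {x..v} w)"
  have KK: "?K z = ?K' z" for z
  proof (cases z)
    case (Pair x w)
    then show ?thesis
      by (auto simp: indicator_def ennreal_mult' \<phi>nn k a less_imp_le mult_ac)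
  qed
  have [measurable]: "Measurable.pred (borel \<Otimes>\<^sub>M borel) (\<lambda>z::real\<times>real. fst z \<in> {0..snd z})"
    unfolding atLeastAtMost_iff by measurable
  have Km: "?K \<in> borel_measurable (lborel \<Otimes>\<^sub>M lborel)"
    by measurable
  have "(\<integral>\<^sup>+w. \<integral>\<^sup>+x. ?K (x, w) \<partial>lborel \<partial>lborel) = (\<integral>\<^sup>+x. \<integral>\<^sup>+w. ?K (x, w) \<partial>lborel \<partial>lborel)"
    by (rule lborel_pair.Fubini[OF Km])
  also have "(\<integral>\<^sup>+w. \<integral>\<^sup>+x. ?K (x, w) \<partial>lborel \<partial>lborel) = (\<integral>\<^sup>+w. ennreal (k * a * exp (k * w) * J w) * indicator {0..v} w \<partial>lborel)"
  proof (rule nn_integral_cong)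
    fix w :: real
    have "(\<integral>\<^sup>+x. ?K (x, w) \<partial>lborel) = ennreal (k * a * exp (k * w) * indicator {0..v} w) * (\<integral>\<^sup>+x. ennreal (\<phi> x) * indicator {0..w} x \<partial>lborel)"
      by (simp add: nn_integral_cmult)
    also have "\<dots> = ennreal (k * a * exp (k * w) * J w) * indicator {0..v} w"
    proof (cases "w \<in> {0..v}")
      case True
      then show ?thesis
        by (simp add: nn_conv[OF _ \<phi>int] \<phi>nn J_def ennreal_mult' k a less_imp_le Jnn[unfolded J_def]
            integral_nonneg[OF \<phi>int])
    qed simp
    finally show "(\<integral>\<^sup>+x. ?K (x, w) \<partial>lborel) = ennreal (k * a * exp (k * w) * J w) * indicator {0..v} w" .
  qed
  also have "\<dots> = ennreal (integral {0..v} (\<lambda>w. k * a * exp (k * w) * J w))"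
    by (rule nn_conv[OF _ int1]) (use k a Jnn in auto)
  also have "(\<integral>\<^sup>+x. \<integral>\<^sup>+w. ?K (x, w) \<partial>lborel \<partial>lborel) = (\<integral>\<^sup>+x. ennreal (a * \<phi> x * (exp (k * v) - exp (k * x))) * indicator {0..v} x \<partial>lborel)"
  proof (rule nn_integral_cong)
    fix x :: real
    have "(\<integral>\<^sup>+w. ?K (x, w) \<partial>lborel) = (\<integral>\<^sup>+w. ?K' (x, w) \<partial>lborel)" using KK by simp
    also have "\<dots> = ennreal (a * \<phi> x * indicator {0..v} x) * (\<integral>\<^sup>+w. ennreal (k * exp (k * w)) * indicator {x..v} w \<partial>lborel)"
      by (simp add: nn_integral_cmult)
    also have "\<dots> = ennreal (a * \<phi> x * (exp (k * v) - exp (k * x))) * indicator {0..v} x"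
    proof (cases "x \<in> {0..v}")
      case True
      have "(\<integral>\<^sup>+w. ennreal (k * exp (k * w)) * indicator {x..v} w \<partial>lborel) = ennreal (exp (k * v) - exp (k * x))"
      proof -
        have hi: "((\<lambda>w. k * exp (k * w)) has_integral (exp (k * v) - exp (k * x))) {x..v}"
          using exp_has_integral[of x v k] True by simp
        have "(\<integral>\<^sup>+w. ennreal (k * exp (k * w)) * indicator {x..v} w \<partial>lborel) = ennreal (integral {x..v} (\<lambda>w. k * exp (k * w)))"
          by (rule nn_conv) (use k has_integral_integrable[OF hi] in auto)
        also have "integral {x..v} (\<lambda>w. k * exp (k * w)) = exp (k * v) - exp (k * x)"
          by (rule integral_unique[OF hi])
        finally show ?thesis .
      qed
      moreover have "0 \<le> exp (k * v) - exp (k * x)" using True k by (simp add: mult_left_mono)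
      ultimately show ?thesis using True \<phi>nn[of x] a
        by (simp add: ennreal_mult')
    qed simp
    finally show "(\<integral>\<^sup>+w. ?K (x, w) \<partial>lborel) = ennreal (a * \<phi> x * (exp (k * v) - exp (k * x))) * indicator {0..v} x" .
  qed
  also have "\<dots> = ennreal (integral {0..v} (\<lambda>x. a * \<phi> x * (exp (k * v) - exp (k * x))))"
  proof (rule nn_conv[OF _ int2])
    fix x :: real assume x: "x \<in> {0..v}"
    then have "0 \<le> exp (k * v) - exp (k * x)" using k by (simp add: mult_left_mono)
    then show "0 \<le> a * \<phi> x * (exp (k * v) - exp (k * x))" using \<phi>nn[of x] a by simp
  qed
  finally have eq0: "ennreal (integral {0..v} (\<lambda>w. k * a * exp (k * w) * J w)) =
      ennreal (integral {0..v} (\<lambda>x. a * \<phi> x * (exp (k * v) - exp (k * x))))" by simp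
  have nn1: "0 \<le> integral {0..v} (\<lambda>x. a * \<phi> x * (exp (k * v) - exp (k * x)))"
  proof (rule integral_nonneg[OF int2])
    fix x :: real assume x: "x \<in> {0..v}"
    then have "0 \<le> exp (k * v) - exp (k * x)" using k by (simp add: mult_left_mono)
    then show "0 \<le> a * \<phi> x * (exp (k * v) - exp (k * x))" using \<phi>nn[of x] a by simp
  qed
  have nn2: "0 \<le> integral {0..v} (\<lambda>w. k * a * exp (k * w) * J w)"
    by (rule integral_nonneg[OF int1]) (use k a Jnn in auto)
  have eq1: "integral {0..v} (\<lambda>w. k * a * exp (k * w) * J w) =
      integral {0..v} (\<lambda>x. a * \<phi> x * (exp (k * v) - exp (k * x)))"
    using eq0 nn1 nn2 by simp
  have int3: "(\<lambda>x. a * (exp (q * x) * \<Phi> x)) integrable_on {0..v}"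
  proof -
    have "(\<lambda>x. a * \<phi> x * exp (k * x)) integrable_on {0..v}"
    proof (rule bnd_integrable[where B="a * exp (a * v) * exp (k * v)"])
      fix x assume x: "x \<in> {0..v}"
      have "exp (k * x) \<le> exp (k * v)" using x k by (simp add: mult_left_mono)
      then show "\<bar>a * \<phi> x * exp (k * x)\<bar> \<le> a * exp (a * v) * exp (k * v)"
        using \<phi>Bd[OF x] a unfolding abs_mult by (intro mult_mono) auto
    qed simp
    moreover have "a * \<phi> x * exp (k * x) = a * (exp (q * x) * \<Phi> x)" for x
      by (simp add: \<phi>_def k_def mult_exp_exp algebra_simps)
    ultimately show ?thesis by simp
  qed
  have "integral {0..v} (\<lambda>x. a * \<phi> x * (exp (k * v) - exp (k * x))) =
      integral {0..v} (\<lambda>x. a * exp (k * v) * \<phi> x - a * (exp (q * x) * \<Phi> x))"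
    by (rule integral_cong) (simp add: \<phi>_def k_def mult_exp_exp algebra_simps)
  also have "\<dots> = a * exp (k * v) * J v - integral {0..v} (\<lambda>x. a * (exp (q * x) * \<Phi> x))"
    using integrable_on_cmult_left[OF \<phi>int, of "a * exp (k * v)" v] int3
    by (subst integral_diff) (auto simp: J_def)
  finally have eq2: "integral {0..v} (\<lambda>w. k * a * exp (k * w) * J w) =
     a * exp (k * v) * J v - integral {0..v} (\<lambda>x. a * (exp (q * x) * \<Phi> x))"
    using eq1 by simp
  have "integral {0..v} (\<lambda>w. exp (q * w) * (a * \<Phi> w + (q - a) * (a * exp (- a * w) * J w))) =
    integral {0..v} (\<lambda>w. a * (exp (q * w) * \<Phi> w) + k * a * exp (k * w) * J w)"
    by (rule integral_cong) (simp add: k_def mult_exp_exp algebra_simps)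
  also have "\<dots> = integral {0..v} (\<lambda>x. a * (exp (q * x) * \<Phi> x)) + integral {0..v} (\<lambda>w. k * a * exp (k * w) * J w)"
    by (rule integral_add[OF int3 int1])
  also have "\<dots> = a * exp (k * v) * J v" using eq2 by simp
  also have "\<dots> = exp (q * v) * (a * exp (- a * v) * J v)"
    by (simp add: k_def mult_exp_exp algebra_simps)
  finally show ?thesis unfolding J_def \<phi>_def by simp
qed

lemma LC_aux:
  fixes \<mu> \<nu> :: "'s::finite pmf" and R :: "('s \<times> 's) set" and \<epsilon> :: real
  assumes eps: "0 \<le> \<epsilon>"
    and RP: "\<And>A. measure_pmf.prob \<mu> A \<le> measure_pmf.prob \<nu> (R``A) + \<epsilon>"
  shows "card (range H - {0}) = n \<Longrightarrow> (\<forall>p. 0 \<le> H p \<and> H p \<le> K) \<Longrightarrow> (\<forall>p. 0 \<le> F p) \<Longrightarrow>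
    (\<forall>p p'. (p, p') \<in> R \<longrightarrow> H p \<le> F p') \<Longrightarrow>
    (\<Sum>p\<in>UNIV. pmf \<mu> p * H p) \<le> (\<Sum>p\<in>UNIV. pmf \<nu> p * F p) + \<epsilon> * K"
proof (induction n arbitrary: H F K rule: less_induct)
  case (less n)
  note HK = less.prems(2) and Fnn = less.prems(3) and HF = less.prems(4)
  have K0: "0 \<le> K" using HK by (meson order.trans)
  have sumF: "0 \<le> (\<Sum>p\<in>UNIV. pmf \<nu> p * F p)" using Fnn by (intro sum_nonneg) auto
  show ?case
  proof (cases "range H - {0} = {}")
    case True
    then have "H p = 0" for p by auto
    then show ?thesis using sumF eps K0 by simp
  next
    case False
    define m where "m = Max (range H)"
    have fin: "finite (range H)" by simp
    have Hm: "H p \<le> m" for p unfolding m_def by (rule Max_ge) auto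
    have m_in: "m \<in> range H" unfolding m_def by (rule Max_in) auto
    from False obtain p0 where "H p0 \<noteq> 0" by auto
    moreover have "0 \<le> H p0" using HK by auto
    ultimately have "0 < H p0" by linarith
    then have m_pos: "0 < m" using Hm[of p0] by linarith
    define V where "V = insert 0 (range H - {m})"
    define v where "v = Max V"
    have finV: "finite V" unfolding V_def by simp
    have v_in: "v \<in> V" unfolding v_def by (rule Max_in[OF finV]) (simp add: V_def)
    have v0: "0 \<le> v" unfolding v_def by (rule Max_ge[OF finV]) (simp add: V_def)
    have vm: "v < m"
    proof (cases "v = 0")
      case True then show ?thesis using m_pos by simp
    next
      case False
      then obtain p where "v = H p" "H p \<noteq> m" using v_in unfolding V_def by auto
      then show ?thesis using Hm[of p] by linarith
    qed
    have Hv: "H p \<le> v" if "H p \<noteq> m" for p unfolding v_def by (rule Max_ge[OF finV]) (use that in \<open>simp add: V_def\<close>)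
    define H1 where "H1 p = min (H p) v" for p
    define F1 where "F1 p = min (F p) v" for p
    define F2 where "F2 p = F p - F1 p" for p
    have H_split: "H p = H1 p + (m - v) * (if H p = m then 1 else 0)" for p
    proof (cases "H p = m")
      case True then show ?thesis using vm by (simp add: H1_def)
    next
      case False then show ?thesis using Hv[of p] by (simp add: H1_def)
    qed
    have card_lt: "card (range H1 - {0}) < n"
    proof -
      have sub: "range H1 - {0} \<subseteq> range H - {0} - {m}"
      proof
        fix y assume "y \<in> range H1 - {0}"
        then obtain p where y: "y = H1 p" "y \<noteq> 0" by auto
        show "y \<in> range H - {0} - {m}"
        proof (cases "H p = m")
          case True
          then have "y = v" using y(1) vm by (simp add: H1_def)
          then have "v \<noteq> 0" using y(2) by simp
          then have "v \<in> range H - {m}" using v_in unfolding V_def by blast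
          then show ?thesis using \<open>y = v\<close> \<open>v \<noteq> 0\<close> by blast
        next
          case False
          then have "y = H p" using Hv[OF False] y(1) by (simp add: H1_def)
          then show ?thesis using y(2) False by blast
        qed
      qed
      have mm: "m \<in> range H - {0}" using m_in m_pos by simp
      have ps: "range H - {0} - {m} \<subset> range H - {0}"
      proof (rule psubsetI)
        show "range H - {0} - {m} \<subseteq> range H - {0}" by (rule Diff_subset)
        show "range H - {0} - {m} \<noteq> range H - {0}" using mm by blast
      qed
      have "card (range H - {0} - {m}) < card (range H - {0})"
        by (rule psubset_card_mono[OF _ ps]) simp
      moreover have "card (range H1 - {0}) \<le> card (range H - {0} - {m})" by (rule card_mono[OF _ sub]) simp
      ultimately show ?thesis using less.prems(1) by simp
    qed
    have IH: "(\<Sum>p\<in>UNIV. pmf \<mu> p * H1 p) \<le> (\<Sum>p\<in>UNIV. pmf \<nu> p * F1 p) + \<epsilon> * v"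
    proof (rule less.IH[OF card_lt refl])
      show "\<forall>p. 0 \<le> H1 p \<and> H1 p \<le> v" using HK v0 by (simp add: H1_def)
      show "\<forall>p. 0 \<le> F1 p" using Fnn v0 by (simp add: F1_def)
      show "\<forall>p p'. (p, p') \<in> R \<longrightarrow> H1 p \<le> F1 p'"
      proof (intro allI impI)
        fix p p' assume "(p, p') \<in> R"
        then have "H p \<le> F p'" using HF by blast
        then show "H1 p \<le> F1 p'" unfolding H1_def F1_def by (rule min.mono) simp
      qed
    qed
    define A where "A = {p. H p = m}"
    have mu_A: "measure_pmf.prob \<mu> A = (\<Sum>p\<in>UNIV. pmf \<mu> p * (if H p = m then 1 else 0))"
    proof -
      have "measure_pmf.prob \<mu> A = sum (pmf \<mu>) {p \<in> UNIV. H p = m}"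
        by (simp add: measure_measure_pmf_finite A_def)
      also have "\<dots> = (\<Sum>p\<in>UNIV. if H p = m then pmf \<mu> p else 0)"
        by (rule sum.inter_filter) simp
      finally show ?thesis by (simp add: if_distrib cong: if_cong)
    qed
    have nu_RA: "(m - v) * measure_pmf.prob \<nu> (R``A) \<le> (\<Sum>p\<in>UNIV. pmf \<nu> p * F2 p)"
    proof -
      have "(m - v) * measure_pmf.prob \<nu> (R``A) = (\<Sum>p\<in>UNIV. pmf \<nu> p * ((m - v) * (if p \<in> R``A then 1 else 0)))"
      proof -
        have "measure_pmf.prob \<nu> (R``A) = sum (pmf \<nu>) {p \<in> UNIV. p \<in> R``A}"
          by (simp add: measure_measure_pmf_finite)
        also have "\<dots> = (\<Sum>p\<in>UNIV. if p \<in> R``A then pmf \<nu> p else 0)"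
          by (rule sum.inter_filter) simp
        finally show ?thesis by (simp add: sum_distrib_left if_distrib mult_ac cong: if_cong)
      qed
      also have "\<dots> \<le> (\<Sum>p\<in>UNIV. pmf \<nu> p * F2 p)"
      proof (rule sum_mono, rule mult_left_mono)
        fix p'
        show "(m - v) * (if p' \<in> R``A then 1 else 0) \<le> F2 p'"
        proof (cases "p' \<in> R``A")
          case True
          then obtain p where "(p, p') \<in> R" "H p = m" by (auto simp: A_def)
          then have "m \<le> F p'" using HF by auto
          then show ?thesis using True vm by (simp add: F2_def F1_def)
        next
          case False then show ?thesis by (simp add: F2_def F1_def)
        qed
      qed simp
      finally show ?thesis .
    qed
    have "(\<Sum>p\<in>UNIV. pmf \<mu> p * H p) = (\<Sum>p\<in>UNIV. pmf \<mu> p * H1 p) + (m - v) * measure_pmf.prob \<mu> A"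
    proof -
      have "(\<Sum>p\<in>UNIV. pmf \<mu> p * H p) = (\<Sum>p\<in>UNIV. pmf \<mu> p * H1 p + (m - v) * (pmf \<mu> p * (if H p = m then 1 else 0)))"
      proof (rule sum.cong[OF refl])
        fix p :: 's
        have "pmf \<mu> p * H p = pmf \<mu> p * (H1 p + (m - v) * (if H p = m then 1 else 0))"
          using H_split[of p] by simp
        then show "pmf \<mu> p * H p = pmf \<mu> p * H1 p + (m - v) * (pmf \<mu> p * (if H p = m then 1 else 0))"
          by (simp add: distrib_left mult_ac)
      qed
      also have "\<dots> = (\<Sum>p\<in>UNIV. pmf \<mu> p * H1 p) + (m - v) * (\<Sum>p\<in>UNIV. pmf \<mu> p * (if H p = m then 1 else 0))"
        by (simp add: sum.distrib sum_distrib_left)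
      finally show ?thesis unfolding mu_A .
    qed
    also have "\<dots> \<le> ((\<Sum>p\<in>UNIV. pmf \<nu> p * F1 p) + \<epsilon> * v) + (m - v) * (measure_pmf.prob \<nu> (R``A) + \<epsilon>)"
      using IH RP[of A] vm by (intro add_mono mult_left_mono) auto
    also have "\<dots> \<le> ((\<Sum>p\<in>UNIV. pmf \<nu> p * F1 p) + \<epsilon> * v) + ((\<Sum>p\<in>UNIV. pmf \<nu> p * F2 p) + (m - v) * \<epsilon>)"
      using nu_RA by (simp add: algebra_simps)
    also have "\<dots> = (\<Sum>p\<in>UNIV. pmf \<nu> p * F p) + \<epsilon> * m"
      by (simp add: F2_def sum.distrib algebra_simps sum_subtractf right_diff_distrib)
    also have "\<dots> \<le> (\<Sum>p\<in>UNIV. pmf \<nu> p * F p) + \<epsilon> * K"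
      using Hm HK m_in eps by (auto intro!: mult_left_mono)
    finally show ?thesis .
  qed
qed

lemma exp_bound_integrable:
  fixes f :: "real \<Rightarrow> real"
  assumes [measurable]: "f \<in> borel_measurable borel" and B: "\<And>x. \<bar>f x\<bar> \<le> C" and q: "0 \<le> q"
  shows "(\<lambda>w. exp (q * w) * f w) integrable_on {0..v}"
proof (rule bnd_integrable[where B="exp (q * v) * C"])
  fix x assume x: "x \<in> {0..v}"
  have "exp (q * x) \<le> exp (q * v)" using x q by (simp add: mult_left_mono)
  then show "\<bar>exp (q * x) * f x\<bar> \<le> exp (q * v) * C"
    unfolding abs_mult using B[of x] by (intro mult_mono) auto
qed simp

locale ansys =
  fixes F :: "'s::finite \<Rightarrow> real \<Rightarrow> real" and Pm :: "'s \<Rightarrow> 's pmf" and a :: "'s \<Rightarrow> real"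
    and g :: 's and q :: real
  assumes F0: "\<And>p v. 0 \<le> F p v" and F1: "\<And>p v. F p v \<le> 1" and Fmono: "\<And>p. mono (F p)"
    and Fneg: "\<And>p v. v \<le> 0 \<Longrightarrow> F p v = 0"
    and apos: "\<And>p. 0 < a p" and aq: "\<And>p. a p \<le> q"
    and Frec: "\<And>p v. p \<noteq> g \<Longrightarrow> 0 \<le> v \<Longrightarrow>
       F p v = a p * exp (- a p * v) * integral {0..v} (\<lambda>w. exp (a p * w) * (\<Sum>p'\<in>UNIV. pmf (Pm p) p' * F p' w))"
begin

definition \<Phi> :: "'s \<Rightarrow> real \<Rightarrow> real" where
  "\<Phi> p w = (\<Sum>p'\<in>UNIV. pmf (Pm p) p' * F p' w)"

lemma q_pos: "0 < q" using apos[of g] aq[of g] by linarith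

lemma Fm[measurable]: "F p \<in> borel_measurable borel"
  by (rule borel_measurable_mono[OF Fmono])

lemma \<Phi>m[measurable]: "\<Phi> p \<in> borel_measurable borel"
  unfolding \<Phi>_def by measurable

lemma \<Phi>0: "0 \<le> \<Phi> p w" unfolding \<Phi>_def using F0 by (intro sum_nonneg) auto

lemma \<Phi>1: "\<Phi> p w \<le> 1"
proof -
  have "\<Phi> p w \<le> (\<Sum>p'\<in>UNIV. pmf (Pm p) p')"
    unfolding \<Phi>_def using F1 by (intro sum_mono) (simp add: mult_left_le)
  also have "\<dots> = 1" by (rule sum_pmf_eq_1) auto
  finally show ?thesis .
qed

lemma \<Phi>mono: "v \<le> w \<Longrightarrow> \<Phi> p v \<le> \<Phi> p w"
  unfolding \<Phi>_def using Fmono by (intro sum_mono mult_left_mono) (auto simp: mono_def)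

lemma Frec': "p \<noteq> g \<Longrightarrow> 0 \<le> v \<Longrightarrow>
   F p v = a p * exp (- a p * v) * integral {0..v} (\<lambda>w. exp (a p * w) * \<Phi> p w)"
  using Frec unfolding \<Phi>_def by simp

lemma F_le_\<Phi>:
  assumes p: "p \<noteq> g" and v: "0 \<le> v"
  shows "F p v \<le> \<Phi> p v"
proof -
  have hi: "((\<lambda>w. a p * exp (a p * w)) has_integral (exp (a p * v) - exp (a p * 0))) {0..v}"
    by (rule exp_has_integral[OF v])
  have int1: "(\<lambda>w. exp (a p * w) * \<Phi> p w) integrable_on {0..v}"
    by (rule exp_bound_integrable[where C=1]) (use \<Phi>0 \<Phi>1 apos[of p] in \<open>auto simp: abs_le_iff less_imp_le\<close>)
  have "integral {0..v} (\<lambda>w. exp (a p * w) * \<Phi> p w) \<le> integral {0..v} (\<lambda>w. \<Phi> p v / a p * (a p * exp (a p * w)))"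
  proof (rule integral_le[OF int1])
    show "(\<lambda>w. \<Phi> p v / a p * (a p * exp (a p * w))) integrable_on {0..v}"
      using integrable_on_cmult_left[OF has_integral_integrable[OF hi], of "\<Phi> p v / a p"] by simp
  next
    fix w assume "w \<in> {0..v}"
    then have "\<Phi> p w \<le> \<Phi> p v" by (intro \<Phi>mono) auto
    then show "exp (a p * w) * \<Phi> p w \<le> \<Phi> p v / a p * (a p * exp (a p * w))"
      using apos[of p] by (simp add: mult.commute)
  qed
  also have "\<dots> = \<Phi> p v / a p * (exp (a p * v) - 1)"
    using integral_mult[OF has_integral_integrable[OF hi], of "\<Phi> p v / a p", symmetric] integral_unique[OF hi]
    by (simp only: mult_zero_right exp_zero)
  finally have I: "integral {0..v} (\<lambda>w. exp (a p * w) * \<Phi> p w) \<le> \<Phi> p v / a p * (exp (a p * v) - 1)" .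
  have "F p v \<le> a p * exp (- a p * v) * (\<Phi> p v / a p * (exp (a p * v) - 1))"
    unfolding Frec'[OF p v] using I apos[of p] by (intro mult_left_mono) auto
  also have "\<dots> = \<Phi> p v * (1 - exp (- a p * v))"
    using apos[of p] by (simp add: field_simps exp_minus)
  also have "\<dots> \<le> \<Phi> p v" using \<Phi>0[of p v] by (simp add: mult_left_le)
  finally show ?thesis .
qed

lemma unif:
  assumes p: "p \<noteq> g" and v: "0 \<le> v"
  shows "exp (q * v) * F p v = integral {0..v} (\<lambda>w. exp (q * w) * (a p * \<Phi> p w + (q - a p) * F p w))"
proof -
  have "exp (q * v) * F p v = exp (q * v) * (a p * exp (- a p * v) * integral {0..v} (\<lambda>x. exp (a p * x) * \<Phi> p x))"
    using Frec'[OF p v] by simp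
  also have "\<dots> = integral {0..v} (\<lambda>w. exp (q * w) * (a p * \<Phi> p w + (q - a p) * (a p * exp (- a p * w) * integral {0..w} (\<lambda>x. exp (a p * x) * \<Phi> p x))))"
    by (rule unif_identity) (use \<Phi>0 \<Phi>1 apos aq v in auto)
  also have "\<dots> = integral {0..v} (\<lambda>w. exp (q * w) * (a p * \<Phi> p w + (q - a p) * F p w))"
    by (rule integral_cong) (use Frec'[OF p] in auto)
  finally show ?thesis .
qed

end

locale ansys_bisim = ansys F Pm a g q for F :: "'s::finite \<Rightarrow> real \<Rightarrow> real" and Pm a g q +
  fixes R :: "('s \<times> 's) set" and \<epsilon> \<delta> :: real
  assumes Rrefl: "\<And>p. (p, p) \<in> R"
    and Rg: "\<And>s s'. (s, s') \<in> R \<Longrightarrow> s = g \<longleftrightarrow> s' = g"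
    and Ra: "\<And>s s'. (s, s') \<in> R \<Longrightarrow> a s \<le> exp \<delta> * a s'"
    and RP: "\<And>s s' A. (s, s') \<in> R \<Longrightarrow> measure_pmf.prob (Pm s) A \<le> measure_pmf.prob (Pm s') (R``A) + \<epsilon>"
    and eps: "0 \<le> \<epsilon>" and delta: "0 \<le> \<delta>"
begin

definition "\<epsilon>' = min \<epsilon> 1"
definition "c = exp \<delta> * (\<epsilon> + 1) - 1"
definition "c' = min c 1"
definition "Dm v = Max ((\<lambda>z. F (fst z) v - F (snd z) v) ` R)"
definition "h v = 1 - exp (- (q * c) * v)"

lemma R_fin: "finite R" by (rule finite_subset[of _ UNIV]) auto

lemma eps'0: "0 \<le> \<epsilon>'" and eps'1: "\<epsilon>' \<le> 1" and eps'e: "\<epsilon>' \<le> \<epsilon>"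
  using eps by (auto simp: \<epsilon>'_def)

lemma c_ge: "\<epsilon> \<le> c"
proof -
  have "1 \<le> exp \<delta>" using delta by simp
  then have "\<epsilon> + 1 \<le> exp \<delta> * (\<epsilon> + 1)" using eps by (simp add: mult_right_mono[of 1 "exp \<delta>" "\<epsilon> + 1", simplified])
  then show ?thesis by (simp add: c_def)
qed

lemma c'0: "0 \<le> c'" and c'1: "c' \<le> 1" and c'c: "c' \<le> c"
  using c_ge eps by (auto simp: c'_def)

lemma Dm_ge: "(s, s') \<in> R \<Longrightarrow> F s v - F s' v \<le> Dm v"
  unfolding Dm_def by (rule Max_ge) (use R_fin in \<open>auto intro: rev_image_eqI\<close>)

lemma Dm_in: "\<exists>z\<in>R. Dm v = F (fst z) v - F (snd z) v"
proof -
  have "Dm v \<in> (\<lambda>z. F (fst z) v - F (snd z) v) ` R"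
    unfolding Dm_def by (rule Max_in) (use R_fin Rrefl in auto)
  then show ?thesis by auto
qed

lemma Dm0: "0 \<le> Dm v" using Dm_ge[OF Rrefl[of g], of v] by simp

lemma Dm1: "Dm v \<le> 1"
  using Dm_in[of v] F0 F1 by (metis diff_le_eq add_increasing2 order_trans F1)

lemma Dm_m[measurable]: "Dm \<in> borel_measurable borel"
  unfolding Dm_def by (rule borel_measurable_Max[OF R_fin]) simp

lemma layer:
  assumes sR: "(s, s') \<in> R"
  shows "\<Phi> s v \<le> \<Phi> s' v + \<epsilon>' + (1 - \<epsilon>') * Dm v"
proof -
  define D where "D = Dm v"
  define H where "H p = max 0 (F p v - D)" for p
  have LC: "(\<Sum>p\<in>UNIV. pmf (Pm s) p * H p) \<le> (\<Sum>p\<in>UNIV. pmf (Pm s') p * F p v) + \<epsilon> * (1 - D)"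
  proof (rule LC_aux[OF eps RP[OF sR] refl])
    show "\<forall>p. 0 \<le> H p \<and> H p \<le> 1 - D"
      using F1[of _ v] Dm1[of v] by (auto simp: H_def D_def)
    show "\<forall>p. 0 \<le> F p v" using F0 by simp
    show "\<forall>p p'. (p, p') \<in> R \<longrightarrow> H p \<le> F p' v"
    proof (intro allI impI)
      fix p p' assume "(p, p') \<in> R"
      then have "F p v - F p' v \<le> D" unfolding D_def by (rule Dm_ge)
      then show "H p \<le> F p' v" using F0[of p' v] by (simp add: H_def)
    qed
  qed
  have "\<Phi> s v \<le> (\<Sum>p\<in>UNIV. pmf (Pm s) p * (H p + D))"
    unfolding \<Phi>_def by (intro sum_mono mult_left_mono) (auto simp: H_def)
  also have "\<dots> = (\<Sum>p\<in>UNIV. pmf (Pm s) p * H p) + (\<Sum>p\<in>UNIV. pmf (Pm s) p) * D"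
    by (simp only: distrib_left sum.distrib sum_distrib_right)
  also have "(\<Sum>p\<in>UNIV. pmf (Pm s) p) = 1" by (rule sum_pmf_eq_1) auto
  finally have A: "\<Phi> s v \<le> \<Phi> s' v + \<epsilon> * (1 - D) + D"
    using LC unfolding \<Phi>_def by linarith
  show ?thesis
  proof (cases "\<epsilon> \<le> 1")
    case True
    then have "\<epsilon>' = \<epsilon>" by (simp add: \<epsilon>'_def)
    then show ?thesis using A by (simp add: D_def algebra_simps)
  next
    case False
    then have "\<epsilon>' = 1" by (simp add: \<epsilon>'_def)
    then show ?thesis using \<Phi>1[of s v] \<Phi>0[of s' v] by simp
  qed
qed

lemma key1:
  assumes A: "0 < A" "A \<le> q" and B: "0 < B" "B \<le> q" and AB: "A \<le> exp \<delta> * B"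
  shows "B * \<epsilon>' + A - B \<le> q * c'"
proof -
  have "B * \<epsilon>' \<le> B" using eps'1 B by (simp add: mult_left_le)
  then have L1: "B * \<epsilon>' + A - B \<le> q" using A by linarith
  have e1: "1 \<le> exp \<delta>" using delta by simp
  have "B * \<epsilon>' \<le> B * \<epsilon>" using eps'e B by simp
  then have "B * \<epsilon>' + A - B \<le> B * (\<epsilon> + exp \<delta> - 1)" using AB by (simp add: algebra_simps)
  also have "\<dots> \<le> q * (\<epsilon> + exp \<delta> - 1)"
  proof -
    have "0 \<le> \<epsilon> + exp \<delta> - 1" using e1 eps by linarith
    then show ?thesis using B by (intro mult_right_mono) auto
  qed
  also have "\<dots> \<le> q * c"
  proof -
    have "\<epsilon> \<le> exp \<delta> * \<epsilon>" using e1 eps by (simp add: mult_right_mono[of 1 "exp \<delta>" \<epsilon>, simplified])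
    then have "\<epsilon> + exp \<delta> - 1 \<le> c" by (simp add: c_def algebra_simps)
    then show ?thesis using A by (intro mult_left_mono) auto
  qed
  finally have L2: "B * \<epsilon>' + A - B \<le> q * c" .
  show ?thesis using L1 L2 by (simp add: c'_def min_def)
qed

lemma key2:
  assumes B: "0 < B" "B \<le> q"
  shows "B * \<epsilon>' \<le> q * c'"
proof -
  have "B * \<epsilon>' \<le> q * \<epsilon>'" using B eps'0 by (intro mult_right_mono) auto
  also have "\<dots> \<le> q * c'"
  proof -
    have "\<epsilon>' \<le> c'" using eps'1 eps'e c_ge by (simp add: c'_def)
    then show ?thesis using B by (intro mult_left_mono) auto
  qed
  finally show ?thesis .
qed

lemma bracket:
  assumes sR: "(s, s') \<in> R" and sg: "s \<noteq> g" and w: "0 \<le> w"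
  shows "a s * \<Phi> s w + (q - a s) * F s w - (a s' * \<Phi> s' w + (q - a s') * F s' w) \<le> q * (c' + (1 - c') * Dm w)"
proof -
  define A where "A = a s"
  define B where "B = a s'"
  define X where "X = \<Phi> s w"
  define Y where "Y = \<Phi> s' w"
  define U where "U = F s w"
  define V where "V = F s' w"
  define D where "D = Dm w"
  have Xb: "X - Y \<le> \<epsilon>' + (1 - \<epsilon>') * D" using layer[OF sR, of w] by (simp add: X_def Y_def D_def)
  have UV: "U - V \<le> D" using Dm_ge[OF sR, of w] by (simp add: U_def V_def D_def)
  have UX: "U \<le> X" using F_le_\<Phi>[OF sg w] by (simp add: U_def X_def)
  have X1: "X \<le> 1" using \<Phi>1 by (simp add: X_def)
  have V0: "0 \<le> V" using F0 by (simp add: V_def)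
  have D0: "0 \<le> D" and D1: "D \<le> 1" using Dm0 Dm1 by (simp_all add: D_def)
  have A0: "0 < A" "A \<le> q" and B0: "0 < B" "B \<le> q" using apos aq by (simp_all add: A_def B_def)
  have AB: "A \<le> exp \<delta> * B" using Ra[OF sR] by (simp add: A_def B_def)
  have "A * X + (q - A) * U - (B * Y + (q - B) * V) \<le> q * (c' + (1 - c') * D)"
  proof (cases "B \<le> A")
    case True
    have e: "A * X + (q - A) * U - (B * Y + (q - B) * V) = B * (X - Y) + (A - B) * (X - V) + (q - A) * (U - V)"
      by (simp add: algebra_simps)
    have i1: "B * (X - Y) \<le> B * (\<epsilon>' + (1 - \<epsilon>') * D)" using Xb B0 by (intro mult_left_mono) auto
    have i2: "(A - B) * (X - V) \<le> (A - B) * 1" using True X1 V0 by (intro mult_left_mono) auto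
    have i3: "(q - A) * (U - V) \<le> (q - A) * D" using UV A0 by (intro mult_left_mono) auto
    have k: "B * \<epsilon>' + A - B \<le> q * c'" by (rule key1[OF A0 B0 AB])
    have i4: "(1 - D) * (B * \<epsilon>' + A - B) \<le> (1 - D) * (q * c')" using k D1 by (intro mult_left_mono) auto
    have e2: "B * (\<epsilon>' + (1 - \<epsilon>') * D) + (A - B) * 1 + (q - A) * D = q * D + (1 - D) * (B * \<epsilon>' + A - B)"
      by (simp add: algebra_simps)
    have e3: "q * D + (1 - D) * (q * c') = q * (c' + (1 - c') * D)" by (simp add: algebra_simps)
    show ?thesis using e i1 i2 i3 i4 e2 e3 by linarith
  next
    case False
    have e: "A * X + (q - A) * U - (B * Y + (q - B) * V) = A * (X - Y) + (B - A) * (U - Y) + (q - B) * (U - V)"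
      by (simp add: algebra_simps)
    have i1: "A * (X - Y) \<le> A * (\<epsilon>' + (1 - \<epsilon>') * D)" using Xb A0 by (intro mult_left_mono) auto
    have i2: "(B - A) * (U - Y) \<le> (B - A) * (\<epsilon>' + (1 - \<epsilon>') * D)" using False Xb UX by (intro mult_left_mono) auto
    have i3: "(q - B) * (U - V) \<le> (q - B) * D" using UV B0 by (intro mult_left_mono) auto
    have k: "B * \<epsilon>' \<le> q * c'" by (rule key2[OF B0])
    have i4: "(1 - D) * (B * \<epsilon>') \<le> (1 - D) * (q * c')" using k D1 by (intro mult_left_mono) auto
    have e2: "A * (\<epsilon>' + (1 - \<epsilon>') * D) + (B - A) * (\<epsilon>' + (1 - \<epsilon>') * D) + (q - B) * D = q * D + (1 - D) * (B * \<epsilon>')"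
      by (simp add: algebra_simps)
    have e3: "q * D + (1 - D) * (q * c') = q * (c' + (1 - c') * D)" by (simp add: algebra_simps)
    show ?thesis using e i1 i2 i3 i4 e2 e3 by linarith
  qed
  then show ?thesis by (simp add: A_def B_def X_def Y_def U_def V_def D_def)
qed

lemma int_unif: "(\<lambda>w. exp (q * w) * (a p * \<Phi> p w + (q - a p) * F p w)) integrable_on {0..v}"
proof (rule exp_bound_integrable[where C=q])
  fix x
  have "0 \<le> a p * \<Phi> p x" using apos[of p] \<Phi>0[of p x] by simp
  moreover have "0 \<le> (q - a p) * F p x" using aq[of p] F0[of p x] by simp
  moreover have "a p * \<Phi> p x \<le> a p" using apos[of p] \<Phi>1[of p x] by (simp add: mult_left_le)
  moreover have "(q - a p) * F p x \<le> q - a p" using aq[of p] F1[of p x] by (simp add: mult_left_le)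
  ultimately show "\<bar>a p * \<Phi> p x + (q - a p) * F p x\<bar> \<le> q" by simp
qed (use q_pos in auto)

lemma int_D: "(\<lambda>w. exp (q * w) * (q * (c' + (1 - c') * Dm w))) integrable_on {0..v}"
proof (rule exp_bound_integrable[where C=q])
  fix x
  have "0 \<le> (1 - c') * Dm x" using c'1 Dm0[of x] by simp
  moreover have "(1 - c') * Dm x \<le> 1 - c'" using c'1 Dm1[of x] by (simp add: mult_left_le)
  ultimately have "0 \<le> c' + (1 - c') * Dm x" "c' + (1 - c') * Dm x \<le> 1" using c'0 by auto
  then show "\<bar>q * (c' + (1 - c') * Dm x)\<bar> \<le> q" using q_pos by (simp add: mult_left_le abs_mult)
qed (use q_pos in auto)

lemma pair_bound:
  assumes sR: "(s, s') \<in> R" and sg: "s \<noteq> g" and v: "0 \<le> v"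
  shows "exp (q * v) * (F s v - F s' v) \<le> integral {0..v} (\<lambda>w. exp (q * w) * (q * (c' + (1 - c') * Dm w)))"
proof -
  have s'g: "s' \<noteq> g" using Rg[OF sR] sg by simp
  have "exp (q * v) * (F s v - F s' v) = exp (q * v) * F s v - exp (q * v) * F s' v" by (simp add: algebra_simps)
  also have "\<dots> = integral {0..v} (\<lambda>w. exp (q * w) * (a s * \<Phi> s w + (q - a s) * F s w)) -
      integral {0..v} (\<lambda>w. exp (q * w) * (a s' * \<Phi> s' w + (q - a s') * F s' w))"
    using unif[OF sg v] unif[OF s'g v] by simp
  also have "\<dots> = integral {0..v} (\<lambda>w. exp (q * w) * (a s * \<Phi> s w + (q - a s) * F s w) -
      exp (q * w) * (a s' * \<Phi> s' w + (q - a s') * F s' w))"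
    by (rule integral_diff[OF int_unif int_unif, symmetric])
  also have "\<dots> \<le> integral {0..v} (\<lambda>w. exp (q * w) * (q * (c' + (1 - c') * Dm w)))"
  proof (rule integral_le)
    show "(\<lambda>w. exp (q * w) * (a s * \<Phi> s w + (q - a s) * F s w) -
      exp (q * w) * (a s' * \<Phi> s' w + (q - a s') * F s' w)) integrable_on {0..v}"
      by (rule integrable_diff[OF int_unif int_unif])
    show "(\<lambda>w. exp (q * w) * (q * (c' + (1 - c') * Dm w))) integrable_on {0..v}" by (rule int_D)
  next
    fix w assume "w \<in> {0..v}"
    then have "a s * \<Phi> s w + (q - a s) * F s w - (a s' * \<Phi> s' w + (q - a s') * F s' w) \<le> q * (c' + (1 - c') * Dm w)"
      by (intro bracket[OF sR sg]) auto
    then have "exp (q * w) * (a s * \<Phi> s w + (q - a s) * F s w - (a s' * \<Phi> s' w + (q - a s') * F s' w)) \<le> exp (q * w) * (q * (c' + (1 - c') * Dm w))"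
      by (intro mult_left_mono) auto
    then show "exp (q * w) * (a s * \<Phi> s w + (q - a s) * F s w) - exp (q * w) * (a s' * \<Phi> s' w + (q - a s') * F s' w) \<le> exp (q * w) * (q * (c' + (1 - c') * Dm w))"
      by (simp add: right_diff_distrib)
  qed
  finally show ?thesis .
qed

lemma Dm_bound:
  assumes v: "0 \<le> v"
  shows "exp (q * v) * Dm v \<le> integral {0..v} (\<lambda>w. exp (q * w) * (q * (c' + (1 - c') * Dm w)))"
proof -
  obtain z where z: "z \<in> R" "Dm v = F (fst z) v - F (snd z) v" using Dm_in by blast
  show ?thesis
  proof (cases "fst z = g")
    case False
    have "(fst z, snd z) \<in> R" using z by simp
    from pair_bound[OF this False v] z show ?thesis by simp
  next
    case True
    then have "snd z = g" using Rg[of "fst z" "snd z"] z by simp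
    then have "Dm v = 0" using z True by simp
    moreover have "0 \<le> integral {0..v} (\<lambda>w. exp (q * w) * (q * (c' + (1 - c') * Dm w)))"
    proof (rule integral_nonneg[OF int_D])
      fix x
      have "0 \<le> (1 - c') * Dm x" using c'1 Dm0[of x] by simp
      then show "0 \<le> exp (q * x) * (q * (c' + (1 - c') * Dm x))" using c'0 q_pos by simp
    qed
    ultimately show ?thesis by simp
  qed
qed

lemma h_bound:
  assumes v: "0 \<le> v"
  shows "integral {0..v} (\<lambda>w. exp (q * w) * (q * (c' + (1 - c') * h w))) \<le> exp (q * v) * h v"
proof -
  define z where "z = q - q * c"
  have hq: "((\<lambda>w. q * exp (q * w)) has_integral (exp (q * v) - exp (q * 0))) {0..v}"
    by (rule exp_has_integral[OF v])
  have hz: "((\<lambda>w. z * exp (z * w)) has_integral (exp (z * v) - exp (z * 0))) {0..v}"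
    by (rule exp_has_integral[OF v])
  have iz: "(\<lambda>w. exp (z * w)) integrable_on {0..v}"
    by (intro integrable_continuous_interval continuous_intros)
  define I where "I = integral {0..v} (\<lambda>w. exp (z * w))"
  have I0: "0 \<le> I" unfolding I_def by (rule integral_nonneg[OF iz]) simp
  have zI: "z * I = exp (z * v) - 1"
    using integral_mult[OF iz, of z] integral_unique[OF hz] by (simp add: I_def)
  have E1: "exp (q * w) * exp (- (q * c) * w) = exp (z * w)" for w
  proof -
    have "exp (q * w) * exp (- (q * c) * w) = exp (q * w + - (q * c) * w)" by (rule mult_exp_exp)
    also have "q * w + - (q * c) * w = z * w" by (simp add: z_def algebra_simps)
    finally show ?thesis .
  qed
  have poly: "X * (q * (c' + (1 - c') * (1 - Y))) = q * X - ((1 - c') * q) * (X * Y)" for X Y :: real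
    by (simp add: algebra_simps)
  have expand: "exp (q * w) * (q * (c' + (1 - c') * h w)) = q * exp (q * w) - ((1 - c') * q) * exp (z * w)" for w
    unfolding h_def poly E1 ..
  have "integral {0..v} (\<lambda>w. exp (q * w) * (q * (c' + (1 - c') * h w))) =
      integral {0..v} (\<lambda>w. q * exp (q * w) - ((1 - c') * q) * exp (z * w))"
    by (simp only: expand)
  also have "\<dots> = integral {0..v} (\<lambda>w. q * exp (q * w)) - integral {0..v} (\<lambda>w. ((1 - c') * q) * exp (z * w))"
    by (rule integral_diff[OF has_integral_integrable[OF hq] integrable_on_cmult_left[OF iz, of "(1 - c') * q", simplified]])
  also have "integral {0..v} (\<lambda>w. q * exp (q * w)) = exp (q * v) - 1"
    using integral_unique[OF hq] by simp
  also have "integral {0..v} (\<lambda>w. ((1 - c') * q) * exp (z * w)) = ((1 - c') * q) * I"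
    unfolding I_def by (rule integral_mult[OF iz, symmetric])
  also have "exp (q * v) - 1 - ((1 - c') * q) * I \<le> exp (q * v) - exp (z * v)"
  proof -
    have "z \<le> (1 - c') * q" using c'c q_pos by (simp add: z_def algebra_simps mult_left_mono)
    then have "z * I \<le> ((1 - c') * q) * I" using I0 by (intro mult_right_mono) auto
    then show ?thesis using zI by simp
  qed
  also have "\<dots> = exp (q * v) * h v"
    unfolding h_def right_diff_distrib E1 by simp
  finally show ?thesis .
qed

lemma c0: "0 \<le> c" using c_ge eps by linarith

lemma h0: "0 \<le> v \<Longrightarrow> 0 \<le> h v"
proof -
  assume v: "0 \<le> v"
  have "0 \<le> q * c * v" using q_pos c0 v by simp
  then have "exp (- (q * c) * v) \<le> 1" by simp
  then show ?thesis by (simp add: h_def)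
qed

lemma h1: "h v \<le> 1" by (simp add: h_def)

lemma int_h: "(\<lambda>w. exp (q * w) * (q * (c' + (1 - c') * h w))) integrable_on {0..v}"
  unfolding h_def by (intro integrable_continuous_interval continuous_intros)

lemma gronwall:
  assumes V: "0 \<le> V"
  shows "Dm V \<le> h V"
proof -
  define G where "G v = Dm v - h v" for v
  have hm[measurable]: "h \<in> borel_measurable borel"
    unfolding h_def by (intro borel_measurable_continuous_onI continuous_intros)
  have Gm[measurable]: "G \<in> borel_measurable borel" unfolding G_def by measurable
  have G1: "G v \<le> 1" if "0 \<le> v" for v using Dm1[of v] h0[OF that] by (simp add: G_def)
  have int_G: "(\<lambda>w. exp (q * w) * (q * (1 - c') * G w)) integrable_on {0..v}" for v
  proof -
    have "(\<lambda>w. exp (q * w) * (q * (c' + (1 - c') * Dm w)) - exp (q * w) * (q * (c' + (1 - c') * h w))) integrable_on {0..v}"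
      by (rule integrable_diff[OF int_D int_h])
    moreover have "exp (q * w) * (q * (c' + (1 - c') * Dm w)) - exp (q * w) * (q * (c' + (1 - c') * h w)) =
        exp (q * w) * (q * (1 - c') * G w)" for w
      by (simp add: G_def algebra_simps)
    ultimately show ?thesis by simp
  qed
  have GI: "exp (q * v) * G v \<le> integral {0..v} (\<lambda>w. exp (q * w) * (q * (1 - c') * G w))" if v: "0 \<le> v" for v
  proof -
    have "exp (q * v) * G v = exp (q * v) * Dm v - exp (q * v) * h v" by (simp add: G_def algebra_simps)
    also have "\<dots> \<le> integral {0..v} (\<lambda>w. exp (q * w) * (q * (c' + (1 - c') * Dm w))) -
        integral {0..v} (\<lambda>w. exp (q * w) * (q * (c' + (1 - c') * h w)))"
      using Dm_bound[OF v] h_bound[OF v] by linarith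
    also have "\<dots> = integral {0..v} (\<lambda>w. exp (q * w) * (q * (c' + (1 - c') * Dm w)) - exp (q * w) * (q * (c' + (1 - c') * h w)))"
      by (rule integral_diff[OF int_D int_h, symmetric])
    also have "\<dots> = integral {0..v} (\<lambda>w. exp (q * w) * (q * (1 - c') * G w))"
      by (rule integral_cong) (simp add: G_def algebra_simps)
    finally show ?thesis .
  qed
  define S where "S = (\<lambda>v. max 0 (G v)) ` {0..V}"
  define Mx where "Mx = Sup S"
  have Sne: "S \<noteq> {}" using V by (simp add: S_def)
  have Sbdd: "bdd_above S"
  proof (rule bdd_aboveI[where M=1])
    fix x assume "x \<in> S"
    then obtain v where "v \<in> {0..V}" "x = max 0 (G v)" by (auto simp: S_def)
    then show "x \<le> 1" using G1[of v] by simp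
  qed
  have Sup_ge: "max 0 (G v) \<le> Mx" if "v \<in> {0..V}" for v
    unfolding Mx_def by (rule cSup_upper[OF _ Sbdd]) (use that in \<open>simp add: S_def\<close>)
  have Mx0: "0 \<le> Mx" using Sup_ge[of 0] V by simp
  define \<theta> where "\<theta> = (1 - c') * (1 - exp (- q * V))"
  have th0: "0 \<le> \<theta>"
  proof -
    have "exp (- q * V) \<le> 1" using q_pos V by simp
    then show ?thesis using c'1 by (simp add: \<theta>_def)
  qed
  have th1: "\<theta> < 1"
  proof -
    have "(1 - c') * (1 - exp (- q * V)) \<le> 1 * (1 - exp (- q * V))"
    proof (rule mult_right_mono)
      show "1 - c' \<le> 1" using c'0 by simp
      have "exp (- q * V) \<le> 1" using q_pos V by simp
      then show "0 \<le> 1 - exp (- q * V)" by simp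
    qed
    then have A: "(1 - c') * (1 - exp (- q * V)) \<le> 1 - exp (- q * V)" by (simp only: mult_1_left)
    have B: "0 < exp (- q * V)" by (rule exp_gt_zero)
    show ?thesis unfolding \<theta>_def using A B by linarith
  qed
  have bound: "max 0 (G v) \<le> \<theta> * Mx" if v: "v \<in> {0..V}" for v
  proof -
    have v0: "0 \<le> v" "v \<le> V" using v by auto
    have hq: "((\<lambda>w. q * exp (q * w)) has_integral (exp (q * v) - exp (q * 0))) {0..v}"
      by (rule exp_has_integral[OF v0(1)])
    have "integral {0..v} (\<lambda>w. exp (q * w) * (q * (1 - c') * G w)) \<le> integral {0..v} (\<lambda>w. ((1 - c') * Mx) * (q * exp (q * w)))"
    proof (rule integral_le[OF int_G])
      show "(\<lambda>w. ((1 - c') * Mx) * (q * exp (q * w))) integrable_on {0..v}"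
        using integrable_on_cmult_left[OF has_integral_integrable[OF hq], of "(1 - c') * Mx"] by simp
    next
      fix w assume w: "w \<in> {0..v}"
      then have "G w \<le> Mx" using Sup_ge[of w] v0 by auto
      then have "(q * (1 - c')) * G w \<le> (q * (1 - c')) * Mx" using q_pos c'1 by (intro mult_left_mono) auto
      then have "exp (q * w) * ((q * (1 - c')) * G w) \<le> exp (q * w) * ((q * (1 - c')) * Mx)" by (rule mult_left_mono) auto
      then show "exp (q * w) * (q * (1 - c') * G w) \<le> ((1 - c') * Mx) * (q * exp (q * w))" by (simp add: mult_ac)
    qed
    also have "\<dots> = ((1 - c') * Mx) * (exp (q * v) - 1)"
      using integral_mult[OF has_integral_integrable[OF hq], of "(1 - c') * Mx", symmetric] integral_unique[OF hq]
      by (simp only: mult_zero_right exp_zero)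
    finally have "exp (q * v) * G v \<le> ((1 - c') * Mx) * (exp (q * v) - 1)" using GI[OF v0(1)] by linarith
    then have "exp (- q * v) * (exp (q * v) * G v) \<le> exp (- q * v) * (((1 - c') * Mx) * (exp (q * v) - 1))"
      by (intro mult_left_mono) auto
    moreover have ee: "exp (- q * v) * exp (q * v) = 1" by (simp add: mult_exp_exp)
    moreover have "exp (- q * v) * (exp (q * v) * G v) = G v"
      by (simp only: mult.assoc[symmetric] ee mult_1_left)
    moreover have "exp (- q * v) * (((1 - c') * Mx) * (exp (q * v) - 1)) = ((1 - c') * Mx) * (exp (- q * v) * exp (q * v) - exp (- q * v))"
      by (simp add: algebra_simps)
    ultimately have Gv: "G v \<le> ((1 - c') * Mx) * (1 - exp (- q * v))" by (simp only: ee)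
    have "exp (- q * V) \<le> exp (- q * v)" using v0 q_pos by (simp add: mult_left_mono)
    then have "((1 - c') * Mx) * (1 - exp (- q * v)) \<le> ((1 - c') * Mx) * (1 - exp (- q * V))"
      using c'1 Mx0 by (intro mult_left_mono) auto
    then have "G v \<le> \<theta> * Mx" using Gv by (simp add: \<theta>_def mult_ac)
    moreover have "0 \<le> \<theta> * Mx" using th0 Mx0 by simp
    ultimately show ?thesis by simp
  qed
  have "Mx \<le> \<theta> * Mx" unfolding Mx_def[of] 
    by (rule cSup_least[OF Sne]) (use bound in \<open>auto simp: S_def Mx_def\<close>)
  then have "(1 - \<theta>) * Mx \<le> 0" by (simp add: algebra_simps)
  then have "Mx \<le> 0" using th1 Mx0 by (simp add: mult_le_0_iff)
  then have "G V \<le> 0" using Sup_ge[of V] V by simp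
  then show ?thesis by (simp add: G_def)
qed

theorem main_bound:
  assumes "(s, s') \<in> R" "0 \<le> r"
  shows "F s r - F s' r \<le> 1 - exp (- q * r * (exp \<delta> * (\<epsilon> + 1) - 1))"
proof -
  have "F s r - F s' r \<le> h r" using Dm_ge[OF assms(1), of r] gronwall[OF assms(2)] by linarith
  then show ?thesis by (simp add: h_def c_def mult_ac)
qed

end




lemma subst_int:
  fixes f :: "real \<Rightarrow> real" and l rr v :: real
  assumes [measurable]: "f \<in> borel_measurable borel"
    and f01: "\<And>w. 0 \<le> f w" "\<And>w. f w \<le> 1" and fneg: "\<And>w. w \<le> 0 \<Longrightarrow> f w = 0"
    and l: "0 < l" and rr: "0 < rr" and v: "0 \<le> v"
  shows "(\<integral>\<^sup>+t. ennreal (exponential_density l t) * ennreal (f (v - t * rr)) \<partial>lborel) =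
    ennreal (integral {0..v} (\<lambda>w. (l / rr) * exp (- (l / rr) * (v - w)) * f w))"
proof -
  let ?T = "\<lambda>t. ennreal (exponential_density l t) * ennreal (f (v - t * rr))"
  have Tm: "?T \<in> borel_measurable borel" by (measurable; simp add: borel_measurable_erlang_density)
  have "(\<integral>\<^sup>+t. ?T t \<partial>lborel) = ennreal \<bar>- 1 / rr\<bar> * (\<integral>\<^sup>+x. ?T (v / rr + (- 1 / rr) * x) \<partial>lborel)"
    using nn_integral_real_affine[OF Tm, of "- 1 / rr" "v / rr"] rr by simp
  also have "\<dots> = (\<integral>\<^sup>+x. ennreal (1 / rr) * ?T (v / rr + (- 1 / rr) * x) \<partial>lborel)"
    using rr by (subst nn_integral_cmult) (auto intro!: measurable_compose[OF _ Tm])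
  also have "\<dots> = (\<integral>\<^sup>+x. ennreal ((l / rr) * exp (- (l / rr) * (v - x)) * f x) * indicator {0..v} x \<partial>lborel)"
  proof (rule nn_integral_cong)
    fix x :: real
    have arg: "v - ((v - x) / rr) * rr = x" using rr by (simp add: field_simps)
    have dd: "v / rr + - 1 / rr * x = (v - x) / rr" using rr by (simp add: field_simps)
    have Teq: "?T (v / rr + (- 1 / rr) * x) = ennreal (exponential_density l ((v - x) / rr)) * ennreal (f x)"
      by (simp only: dd arg)
    have "ennreal (1 / rr) * ?T (v / rr + (- 1 / rr) * x) =
        ennreal (1 / rr) * (ennreal (exponential_density l ((v - x) / rr)) * ennreal (f x))"
      by (simp only: Teq)
    also have "\<dots> = ennreal ((l / rr) * exp (- (l / rr) * (v - x)) * f x) * indicator {0..v} x"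
    proof (cases "x \<in> {0..v}")
      case True
      have "0 \<le> (v - x) / rr" using True rr by simp
      then have e: "exponential_density l ((v - x) / rr) = l * exp (- ((v - x) / rr) * l)"
        by (simp add: exponential_density_def)
      have ee: "- ((v - x) / rr) * l = - (l / rr) * (v - x)" by (simp add: field_simps)
      have d0: "0 \<le> exponential_density l ((v - x) / rr)" by (rule exponential_density_nonneg[OF l])
      have r0: "0 \<le> 1 / rr" using rr by simp
      have "ennreal (1 / rr) * (ennreal (exponential_density l ((v - x) / rr)) * ennreal (f x)) =
          ennreal (1 / rr * (exponential_density l ((v - x) / rr) * f x))"
        unfolding ennreal_mult'[OF d0, symmetric] ennreal_mult'[OF r0, symmetric] ..
      also have "1 / rr * (exponential_density l ((v - x) / rr) * f x) = (l / rr) * exp (- (l / rr) * (v - x)) * f x"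
        unfolding e ee by simp
      finally show ?thesis using True by simp
    next
      case False
      then consider "x < 0" | "v < x" by fastforce
      then show ?thesis
      proof cases
        case 1 then show ?thesis using fneg[of x] by simp
      next
        case 2
        then have "(v - x) / rr < 0" using rr by (simp add: divide_neg_pos)
        then have "exponential_density l ((v - x) / rr) = 0" by (simp add: exponential_density_def)
        then show ?thesis using 2 by simp
      qed
    qed
    finally show "ennreal (1 / rr) * ?T (v / rr + (- 1 / rr) * x) = ennreal ((l / rr) * exp (- (l / rr) * (v - x)) * f x) * indicator {0..v} x" .
  qed
  also have "\<dots> = ennreal (integral {0..v} (\<lambda>w. (l / rr) * exp (- (l / rr) * (v - w)) * f w))"
  proof (rule nn_conv)
    show "\<And>x. x \<in> {0..v} \<Longrightarrow> 0 \<le> l / rr * exp (- (l / rr) * (v - x)) * f x"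
      using l rr f01 by simp
    show "(\<lambda>w. (l / rr) * exp (- (l / rr) * (v - w)) * f w) integrable_on {0..v}"
    proof (rule bnd_integrable[where B="l / rr"])
      fix x assume x: "x \<in> {0..v}"
      have "exp (- (l / rr) * (v - x)) \<le> 1" using x l rr by simp
      then have "exp (- (l / rr) * (v - x)) * f x \<le> 1 * 1" using f01[of x] by (intro mult_mono) auto
      then have "(l / rr) * (exp (- (l / rr) * (v - x)) * f x) \<le> (l / rr) * 1" using l rr by (intro mult_left_mono) auto
      then show "\<bar>l / rr * exp (- (l / rr) * (v - x)) * f x\<bar> \<le> l / rr" using l rr f01[of x] by (simp add: mult.assoc)
    qed simp
  qed
  finally show ?thesis .
qed

locale ctmc =
  fixes P :: "'s::finite \<Rightarrow> 's pmf" and E :: "'s \<Rightarrow> real" and \<rho> :: "'s \<Rightarrow> real" and g :: 's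
  assumes E_pos: "\<And>p. E p > 0"
    and rho_pos: "\<And>p. \<rho> p > 0"
begin

abbreviation "M \<equiv> ctmc_step_measure P E"
abbreviation "\<Omega> \<equiv> ctmc_path_measure P E"

lemma prob_space_M: "prob_space M"
proof -
  interpret A: prob_space "measure_pmf (Pi_pmf UNIV undefined P)" by (rule prob_space_measure_pmf)
  interpret B: prob_space "PiM UNIV (\<lambda>p. density lborel (exponential_density (E p)))"
    by (intro prob_space_PiM prob_space_exponential_density E_pos)
  interpret pair_prob_space "measure_pmf (Pi_pmf UNIV undefined P)" "PiM UNIV (\<lambda>p. density lborel (exponential_density (E p)))" ..
  show ?thesis unfolding ctmc_step_measure_def by (rule P.prob_space_axioms)
qed

lemma space_M: "space M = UNIV"
  by (simp add: ctmc_step_measure_def space_pair_measure space_PiM)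

lemma space_Omega: "space \<Omega> = UNIV"
  by (simp add: ctmc_path_measure_def space_PiM space_M)

sublocale S: sequence_space M
  unfolding sequence_space_def product_prob_space_def product_sigma_finite_def
    product_prob_space_axioms_def
  using prob_space_M prob_space_imp_sigma_finite by auto

lemma Omega_eq: "\<Omega> = S.S" by (simp add: ctmc_path_measure_def)

lemma prob_space_Omega: "prob_space \<Omega>"
  unfolding Omega_eq by (rule S.prob_space_axioms)

lemma meas_fst_comp: "(\<lambda>\<omega>. fst (\<omega> n) p) \<in> \<Omega> \<rightarrow>\<^sub>M count_space UNIV"
proof -
  have "(\<lambda>\<omega>. \<omega> n) \<in> \<Omega> \<rightarrow>\<^sub>M M" unfolding ctmc_path_measure_def by simp
  moreover have "(\<lambda>x. fst x p) \<in> M \<rightarrow>\<^sub>M count_space UNIV"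
  proof -
    have "fst \<in> M \<rightarrow>\<^sub>M measure_pmf (Pi_pmf UNIV undefined P)"
      unfolding ctmc_step_measure_def by simp
    moreover have "(\<lambda>f::'s\<Rightarrow>'s. f p) \<in> measure_pmf (Pi_pmf UNIV undefined P) \<rightarrow>\<^sub>M count_space UNIV"
      by simp
    ultimately show ?thesis by (rule measurable_compose)
  qed
  ultimately show ?thesis by (rule measurable_compose)
qed

lemma meas_snd_comp: "(\<lambda>\<omega>. snd (\<omega> n) p) \<in> borel_measurable \<Omega>"
proof -
  have "(\<lambda>\<omega>. \<omega> n) \<in> \<Omega> \<rightarrow>\<^sub>M M" unfolding ctmc_path_measure_def by simp
  moreover have "(\<lambda>x. snd x p) \<in> borel_measurable M"
  proof -
    have "snd \<in> M \<rightarrow>\<^sub>M (PiM UNIV (\<lambda>p. density lborel (exponential_density (E p))))"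
      unfolding ctmc_step_measure_def by simp
    moreover have "(\<lambda>f. f p) \<in> (PiM UNIV (\<lambda>p. density lborel (exponential_density (E p)))) \<rightarrow>\<^sub>M borel"
      by (rule measurable_component_singleton[THEN measurable_compose]) auto
    ultimately show ?thesis by (rule measurable_compose)
  qed
  ultimately show ?thesis by (rule measurable_compose)
qed

lemma meas_path_state: "(\<lambda>\<omega>. path_state s \<omega> n) \<in> \<Omega> \<rightarrow>\<^sub>M count_space UNIV"
proof (induction n)
  case 0 then show ?case by simp
next
  case (Suc n)
  have "(\<lambda>\<omega>. fst (\<omega> n) (path_state s \<omega> n)) \<in> \<Omega> \<rightarrow>\<^sub>M count_space UNIV"
    by (rule measurable_compose_countable'[where I=UNIV, OF meas_fst_comp Suc]) simp
  then show ?case by simp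
qed

lemma meas_path_time: "(\<lambda>\<omega>. path_time s \<omega> n) \<in> borel_measurable \<Omega>"
  unfolding path_time_def
  by (rule measurable_compose_countable'[where I=UNIV, OF meas_snd_comp meas_path_state]) simp


definition acc :: "'s \<Rightarrow> (nat \<Rightarrow> ('s \<Rightarrow> 's) \<times> ('s \<Rightarrow> real)) \<Rightarrow> nat \<Rightarrow> real" where
  "acc s \<omega> m = (\<Sum>j<m. path_time s \<omega> j * \<rho> (path_state s \<omega> j))"

definition Cl :: "'s \<Rightarrow> real \<Rightarrow> (nat \<Rightarrow> ('s \<Rightarrow> 's) \<times> ('s \<Rightarrow> real)) set" where
  "Cl s v = {\<omega>. \<exists>m. path_state s \<omega> m = g \<and> acc s \<omega> m < v}"

lemma path_state_shift: "path_state s (case_nat x \<omega>) (Suc m) = path_state (fst x s) \<omega> m"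
  by (induction m) auto

lemma path_time_shift0: "path_time s (case_nat x \<omega>) 0 = snd x s"
  by (simp add: path_time_def)

lemma path_time_shift: "path_time s (case_nat x \<omega>) (Suc m) = path_time (fst x s) \<omega> m"
  by (simp add: path_time_def path_state_shift del: path_state.simps)

lemma acc_shift: "acc s (case_nat x \<omega>) (Suc m) = snd x s * \<rho> s + acc (fst x s) \<omega> m"
  unfolding acc_def sum.lessThan_Suc_shift
  by (simp add: path_time_shift0 path_time_shift path_state_shift del: path_state.simps(2))

lemma acc_0[simp]: "acc s \<omega> 0 = 0" by (simp add: acc_def)

lemma Cl_shift: "case_nat x \<omega> \<in> Cl s v \<longleftrightarrow> (s = g \<and> 0 < v) \<or> \<omega> \<in> Cl (fst x s) (v - snd x s * \<rho> s)"
proof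
  assume "case_nat x \<omega> \<in> Cl s v"
  then obtain m where m: "path_state s (case_nat x \<omega>) m = g" "acc s (case_nat x \<omega>) m < v"
    by (auto simp: Cl_def)
  show "(s = g \<and> 0 < v) \<or> \<omega> \<in> Cl (fst x s) (v - snd x s * \<rho> s)"
  proof (cases m)
    case 0 then show ?thesis using m by simp
  next
    case (Suc m')
    then show ?thesis using m unfolding Cl_def
      by (auto simp: path_state_shift acc_shift simp del: path_state.simps)
  qed
next
  assume "(s = g \<and> 0 < v) \<or> \<omega> \<in> Cl (fst x s) (v - snd x s * \<rho> s)"
  then show "case_nat x \<omega> \<in> Cl s v"
  proof
    assume "s = g \<and> 0 < v" then show ?thesis unfolding Cl_def
      by (intro CollectI exI[of _ 0]) simp
  next
    assume "\<omega> \<in> Cl (fst x s) (v - snd x s * \<rho> s)"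
    then obtain m where "path_state (fst x s) \<omega> m = g" "acc (fst x s) \<omega> m < v - snd x s * \<rho> s"
      by (auto simp: Cl_def)
    then show ?thesis unfolding Cl_def
      by (intro CollectI exI[of _ "Suc m"]) (simp add: path_state_shift acc_shift del: path_state.simps)
  qed
qed

lemmas [measurable] = meas_path_state meas_path_time

lemma meas_acc[measurable]: "(\<lambda>\<omega>. acc s \<omega> m) \<in> borel_measurable \<Omega>"
  unfolding acc_def
  apply (intro borel_measurable_sum borel_measurable_times)
   apply simp
  apply (rule measurable_compose[OF meas_path_state]) 
  apply simp
  done

lemma sets_Cl[measurable]: "Cl s v \<in> sets \<Omega>"
proof -
  have "Cl s v = {\<omega> \<in> space \<Omega>. \<exists>m. path_state s \<omega> m = g \<and> acc s \<omega> m < v}"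
    by (simp add: Cl_def space_Omega)
  also have "\<dots> \<in> sets \<Omega>" by measurable
  finally show ?thesis .
qed

lemma emeasure_Cl_rec:
  "emeasure \<Omega> (Cl s v) = (if s = g \<and> 0 < v then 1 else
     \<integral>\<^sup>+x. emeasure \<Omega> (Cl (fst x s) (v - snd x s * \<rho> s)) \<partial>M)"
proof -
  let ?f = "\<lambda>(x, \<omega>). case_nat x \<omega>"
  have f: "?f \<in> M \<Otimes>\<^sub>M \<Omega> \<rightarrow>\<^sub>M \<Omega>"
    unfolding Omega_eq by measurable
  have "emeasure \<Omega> (Cl s v) = emeasure (distr (M \<Otimes>\<^sub>M \<Omega>) \<Omega> ?f) (Cl s v)"
    using S.PiM_iter by (simp add: Omega_eq)
  also have "\<dots> = emeasure (M \<Otimes>\<^sub>M \<Omega>) (?f -` Cl s v \<inter> space (M \<Otimes>\<^sub>M \<Omega>))"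
    by (rule emeasure_distr[OF f sets_Cl])
  also have "\<dots> = \<integral>\<^sup>+x. emeasure \<Omega> (Pair x -` (?f -` Cl s v \<inter> space (M \<Otimes>\<^sub>M \<Omega>))) \<partial>M"
    unfolding Omega_eq
    by (rule S.emeasure_pair_measure_alt) (use measurable_sets[OF f sets_Cl] in \<open>simp add: Omega_eq\<close>)
  also have "\<dots> = \<integral>\<^sup>+x. (if s = g \<and> 0 < v then 1 else emeasure \<Omega> (Cl (fst x s) (v - snd x s * \<rho> s))) \<partial>M"
  proof (rule nn_integral_cong)
    fix x assume "x \<in> space M"
    have "Pair x -` (?f -` Cl s v \<inter> space (M \<Otimes>\<^sub>M \<Omega>)) =
          (if s = g \<and> 0 < v then space \<Omega> else Cl (fst x s) (v - snd x s * \<rho> s))"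
      by (auto simp: space_pair_measure space_M space_Omega Cl_shift)
    then show "emeasure \<Omega> (Pair x -` (?f -` Cl s v \<inter> space (M \<Otimes>\<^sub>M \<Omega>))) =
      (if s = g \<and> 0 < v then 1 else emeasure \<Omega> (Cl (fst x s) (v - snd x s * \<rho> s)))"
      using prob_space.emeasure_space_1[OF prob_space_Omega] by simp
  qed
  also have "\<dots> = (if s = g \<and> 0 < v then 1 else
     \<integral>\<^sup>+x. emeasure \<Omega> (Cl (fst x s) (v - snd x s * \<rho> s)) \<partial>M)"
    using prob_space.emeasure_space_1[OF prob_space_M] by (cases "s = g \<and> 0 < v") auto
  finally show ?thesis .
qed

lemma marginal:
  fixes G :: "'s \<Rightarrow> real \<Rightarrow> ennreal"
  assumes G[measurable]: "\<And>p. G p \<in> borel_measurable borel"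
  shows "(\<integral>\<^sup>+x. G (fst x s) (snd x s) \<partial>M) =
    (\<Sum>p\<in>UNIV. ennreal (pmf (P s) p) * \<integral>\<^sup>+t. ennreal (exponential_density (E s) t) * G p t \<partial>lborel)"
proof -
  let ?A = "measure_pmf (Pi_pmf UNIV undefined P)"
  let ?D = "\<lambda>p. density lborel (exponential_density (E p))"
  let ?B = "PiM UNIV ?D"
  interpret B: prob_space ?B
    by (intro prob_space_PiM prob_space_exponential_density E_pos)
  have comp: "(\<lambda>\<tau>. \<tau> s) \<in> ?B \<rightarrow>\<^sub>M borel"
    by (rule measurable_component_singleton[THEN measurable_compose]) auto
  have H: "(\<lambda>x. G (fst x s) (snd x s)) \<in> borel_measurable (?A \<Otimes>\<^sub>M ?B)"
  proof (rule measurable_compose_countable'[where I=UNIV and g="\<lambda>x. fst x s"])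
    fix p :: 's
    have "(\<lambda>x. snd x s) \<in> (?A \<Otimes>\<^sub>M ?B) \<rightarrow>\<^sub>M borel"
      by (rule measurable_compose[OF measurable_snd comp])
    then show "(\<lambda>x. G p (snd x s)) \<in> borel_measurable (?A \<Otimes>\<^sub>M ?B)"
      by (rule measurable_compose) (rule G)
  next
    show "(\<lambda>x. fst x s) \<in> (?A \<Otimes>\<^sub>M ?B) \<rightarrow>\<^sub>M count_space UNIV"
      by (rule measurable_compose[OF measurable_fst]) simp
  qed simp
  have "(\<integral>\<^sup>+x. G (fst x s) (snd x s) \<partial>M) = (\<integral>\<^sup>+f. \<integral>\<^sup>+\<tau>. G (f s) (\<tau> s) \<partial>?B \<partial>?A)"
    unfolding ctmc_step_measure_def using B.nn_integral_fst[OF H] by simp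
  also have "\<dots> = (\<integral>\<^sup>+f. \<integral>\<^sup>+t. G (f s) t \<partial>?D s \<partial>?A)"
  proof (rule nn_integral_cong)
    fix f :: "'s \<Rightarrow> 's"
    have "(\<integral>\<^sup>+t. G (f s) t \<partial>?D s) = (\<integral>\<^sup>+t. G (f s) t \<partial>distr ?B (?D s) (\<lambda>\<tau>. \<tau> s))"
      by (subst distr_PiM_component) (auto intro: prob_space_exponential_density E_pos)
    also have "\<dots> = (\<integral>\<^sup>+\<tau>. G (f s) (\<tau> s) \<partial>?B)"
      by (rule nn_integral_distr) (auto simp: measurable_component_singleton)
    finally show "(\<integral>\<^sup>+\<tau>. G (f s) (\<tau> s) \<partial>?B) = (\<integral>\<^sup>+t. G (f s) t \<partial>?D s)" ..
  qed
  also have "\<dots> = (\<integral>\<^sup>+p. \<integral>\<^sup>+t. G p t \<partial>?D s \<partial>measure_pmf (map_pmf (\<lambda>f. f s) (Pi_pmf UNIV undefined P)))"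
    by simp
  also have "map_pmf (\<lambda>f. f s) (Pi_pmf UNIV undefined P) = P s"
    by (subst Pi_pmf_component) auto
  also have "(\<integral>\<^sup>+p. \<integral>\<^sup>+t. G p t \<partial>?D s \<partial>measure_pmf (P s)) =
     (\<Sum>p\<in>UNIV. (\<integral>\<^sup>+t. G p t \<partial>?D s) * ennreal (pmf (P s) p))"
    by (rule nn_integral_measure_pmf_support) auto
  also have "\<dots> = (\<Sum>p\<in>UNIV. ennreal (pmf (P s) p) * \<integral>\<^sup>+t. ennreal (exponential_density (E s) t) * G p t \<partial>lborel)"
    by (intro sum.cong refl) (simp add: nn_integral_density mult.commute)
  finally show ?thesis .
qed

lemma AE_exp_pos: "0 < l \<Longrightarrow> AE t in density lborel (exponential_density l). 0 < t"
proof -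
  assume l: "0 < l"
  have "AE t in lborel. t \<noteq> 0" by (rule AE_lborel_singleton)
  then have "AE t in lborel. 0 < ennreal (exponential_density l t) \<longrightarrow> 0 < t"
    by eventually_elim (auto simp: exponential_density_def split: if_splits)
  then show ?thesis
    by (subst AE_density) (auto simp: borel_measurable_erlang_density)
qed

lemma AE_pos_M: "AE x in M. 0 < snd x p"
proof -
  let ?A = "measure_pmf (Pi_pmf UNIV undefined P)"
  let ?D = "\<lambda>p. density lborel (exponential_density (E p))"
  let ?B = "PiM UNIV ?D"
  interpret B: prob_space ?B
    by (intro prob_space_PiM prob_space_exponential_density E_pos)
  interpret AB: pair_sigma_finite ?A ?B
    by (intro pair_sigma_finite.intro prob_space_imp_sigma_finite prob_space_measure_pmf B.prob_space_axioms)
  have B: "AE \<tau> in ?B. 0 < \<tau> p"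
    by (rule AE_PiM_component) (auto intro: prob_space_exponential_density E_pos AE_exp_pos)
  have "AE x in ?A \<Otimes>\<^sub>M ?B. 0 < snd x p"
  proof (rule AB.AE_pair_measure)
    have "(\<lambda>x. snd x p) \<in> borel_measurable (?A \<Otimes>\<^sub>M ?B)"
      by (rule measurable_compose[OF measurable_snd]) (rule measurable_component_singleton[THEN measurable_compose]; simp)
    then show "{x \<in> space (?A \<Otimes>\<^sub>M ?B). 0 < snd x p} \<in> sets (?A \<Otimes>\<^sub>M ?B)" by measurable
    show "AE x in ?A. AE y in ?B. 0 < snd (x, y) p" using B by simp
  qed
  then show ?thesis unfolding ctmc_step_measure_def .
qed

definition "Pos = {\<omega>. \<forall>j p. 0 < snd (\<omega> j) p}"

lemma AE_Pos: "AE \<omega> in \<Omega>. \<omega> \<in> Pos"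
proof -
  have "AE \<omega> in \<Omega>. 0 < snd (\<omega> j) p" for j p
    unfolding ctmc_path_measure_def
    by (rule AE_PiM_component) (auto intro: prob_space_M AE_pos_M)
  then have "AE \<omega> in \<Omega>. \<forall>j. \<forall>p. 0 < snd (\<omega> j) p"
    by (simp add: AE_all_countable)
  then show ?thesis by (simp add: Pos_def)
qed

lemma Pos_time: "\<omega> \<in> Pos \<Longrightarrow> 0 < path_time s \<omega> j"
  by (simp add: Pos_def path_time_def)

lemma Pos_acc: "\<omega> \<in> Pos \<Longrightarrow> 0 < m \<Longrightarrow> 0 < acc s \<omega> m"
  unfolding acc_def by (intro sum_pos) (auto intro!: mult_pos_pos Pos_time rho_pos)

definition "Fm p v = measure \<Omega> (Cl p v)"

lemma emeasure_Cl: "emeasure \<Omega> (Cl p v) = ennreal (Fm p v)"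
proof -
  interpret prob_space \<Omega> by (rule prob_space_Omega)
  show ?thesis unfolding Fm_def by (rule emeasure_eq_measure)
qed

lemma Fm0: "0 \<le> Fm p v" by (simp add: Fm_def)
lemma Fm1: "Fm p v \<le> 1"
proof -
  interpret prob_space \<Omega> by (rule prob_space_Omega)
  show ?thesis unfolding Fm_def by (rule prob_le_1)
qed

lemma Cl_mono: "v \<le> w \<Longrightarrow> Cl p v \<subseteq> Cl p w"
  by (auto simp: Cl_def)

lemma Fm_mono: "mono (Fm p)"
proof -
  interpret prob_space \<Omega> by (rule prob_space_Omega)
  show ?thesis unfolding mono_def Fm_def by (auto intro!: finite_measure_mono Cl_mono)
qed

lemma Fm_neg: "v \<le> 0 \<Longrightarrow> Fm p v = 0"
proof -
  assume v: "v \<le> 0"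
  have "AE \<omega> in \<Omega>. \<omega> \<notin> Cl p v"
    using AE_Pos
  proof eventually_elim
    case (elim \<omega>)
    show ?case
    proof
      assume "\<omega> \<in> Cl p v"
      then obtain m where m: "acc p \<omega> m < v" by (auto simp: Cl_def)
      show False
      proof (cases m)
        case 0 then show ?thesis using m v by simp
      next
        case (Suc m') then show ?thesis using Pos_acc[OF elim, of "Suc m'" p] m v by simp
      qed
    qed
  qed
  then have "emeasure \<Omega> (Cl p v) = 0"
    by (subst AE_iff_measurable[OF sets_Cl, symmetric]) (auto simp: space_Omega)
  then show ?thesis using emeasure_Cl[of p v] Fm0[of p v] by simp
qed

lemma Fm_meas[measurable]: "Fm p \<in> borel_measurable borel"
  by (rule borel_measurable_mono[OF Fm_mono])

lemma Fm_rec: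
  assumes p: "p \<noteq> g" and v: "0 \<le> v"
  shows "Fm p v = (E p / \<rho> p) * exp (- (E p / \<rho> p) * v) *
     integral {0..v} (\<lambda>w. exp ((E p / \<rho> p) * w) * (\<Sum>p'\<in>UNIV. pmf (P p) p' * Fm p' w))"
proof -
  define a where "a = E p / \<rho> p"
  have a0: "0 < a" using E_pos rho_pos by (simp add: a_def)
  define I where "I p' = integral {0..v} (\<lambda>w. a * exp (- a * (v - w)) * Fm p' w)" for p'
  have Gm: "(\<lambda>t. ennreal (Fm p' (v - t * \<rho> p))) \<in> borel_measurable borel" for p'
    by measurable
  have intI: "(\<lambda>w. a * exp (- a * (v - w)) * Fm p' w) integrable_on {0..v}" for p'
  proof (rule bnd_integrable[where B=a])
    fix x assume x: "x \<in> {0..v}"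
    have "exp (- a * (v - x)) \<le> 1" using x a0 by simp
    then have "exp (- a * (v - x)) * Fm p' x \<le> 1 * 1" using Fm0 Fm1 by (intro mult_mono) auto
    then have "a * (exp (- a * (v - x)) * Fm p' x) \<le> a * 1" using a0 by (intro mult_left_mono) auto
    then show "\<bar>a * exp (- a * (v - x)) * Fm p' x\<bar> \<le> a" using a0 Fm0[of p' x] by (simp add: mult.assoc)
  qed simp
  have I0: "0 \<le> I p'" for p'
    unfolding I_def by (rule integral_nonneg[OF intI]) (use a0 Fm0 in simp)
  have "ennreal (Fm p v) = emeasure \<Omega> (Cl p v)" by (simp add: emeasure_Cl)
  also have "\<dots> = (\<integral>\<^sup>+x. ennreal (Fm (fst x p) (v - snd x p * \<rho> p)) \<partial>M)"
    using p by (subst emeasure_Cl_rec) (simp add: emeasure_Cl)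
  also have "\<dots> = (\<Sum>p'\<in>UNIV. ennreal (pmf (P p) p') * \<integral>\<^sup>+t. ennreal (exponential_density (E p) t) * ennreal (Fm p' (v - t * \<rho> p)) \<partial>lborel)"
    by (rule marginal[where G="\<lambda>p' t. ennreal (Fm p' (v - t * \<rho> p))", OF Gm])
  also have "\<dots> = (\<Sum>p'\<in>UNIV. ennreal (pmf (P p) p') * ennreal (I p'))"
  proof (rule sum.cong[OF refl])
    fix p' :: 's
    have "(\<integral>\<^sup>+t. ennreal (exponential_density (E p) t) * ennreal (Fm p' (v - t * \<rho> p)) \<partial>lborel) = ennreal (I p')"
      unfolding I_def a_def
      by (rule subst_int) (use Fm0 Fm1 Fm_neg E_pos rho_pos v in auto)
    then show "ennreal (pmf (P p) p') * (\<integral>\<^sup>+t. ennreal (exponential_density (E p) t) * ennreal (Fm p' (v - t * \<rho> p)) \<partial>lborel) =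
        ennreal (pmf (P p) p') * ennreal (I p')" by simp
  qed
  also have "\<dots> = ennreal (\<Sum>p'\<in>UNIV. pmf (P p) p' * I p')"
    using I0 by (simp add: ennreal_mult'[symmetric])
  finally have "ennreal (Fm p v) = ennreal (\<Sum>p'\<in>UNIV. pmf (P p) p' * I p')" .
  moreover have "0 \<le> (\<Sum>p'\<in>UNIV. pmf (P p) p' * I p')" using I0 by (intro sum_nonneg) auto
  ultimately have F_eq: "Fm p v = (\<Sum>p'\<in>UNIV. pmf (P p) p' * I p')" using Fm0[of p v] by simp
  also have "\<dots> = integral {0..v} (\<lambda>w. \<Sum>p'\<in>UNIV. pmf (P p) p' * (a * exp (- a * (v - w)) * Fm p' w))"
    unfolding I_def
    by (subst integral_sum) (auto intro: integrable_on_cmult_left[OF intI, simplified] simp: integral_mult)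
  also have "\<dots> = integral {0..v} (\<lambda>w. (a * exp (- a * v)) * (exp (a * w) * (\<Sum>p'\<in>UNIV. pmf (P p) p' * Fm p' w)))"
  proof (rule integral_cong)
    fix w
    have "exp (- a * (v - w)) = exp (- a * v) * exp (a * w)" by (simp add: mult_exp_exp algebra_simps)
    then show "(\<Sum>p'\<in>UNIV. pmf (P p) p' * (a * exp (- a * (v - w)) * Fm p' w)) =
        (a * exp (- a * v)) * (exp (a * w) * (\<Sum>p'\<in>UNIV. pmf (P p) p' * Fm p' w))"
      by (simp add: sum_distrib_left mult_ac)
  qed
  also have "\<dots> = (a * exp (- a * v)) * integral {0..v} (\<lambda>w. exp (a * w) * (\<Sum>p'\<in>UNIV. pmf (P p) p' * Fm p' w))"
    by simp
  finally show ?thesis by (simp add: a_def)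
qed

definition "Bs s \<omega> m = (\<Sum>j<m. path_time s \<omega> j)"
definition "Uu r s \<omega> m = min (\<Sum>i\<le>m. path_time s \<omega> i) (Bs s \<omega> m + (r - acc s \<omega> m) / \<rho> g)"

lemma orig_char:
  "(\<exists>t\<ge>0. (\<exists>m. t \<le> (\<Sum>i\<le>m. path_time s \<omega> i)) \<and> path_at s \<omega> t = g \<and> path_reward \<rho> s \<omega> t \<le> r) \<longleftrightarrow>
   (\<exists>m. path_state s \<omega> m = g \<and> 0 \<le> Uu r s \<omega> m \<and> (\<forall>j<m. (\<Sum>i\<le>j. path_time s \<omega> i) < Uu r s \<omega> m))"
  (is "?L \<longleftrightarrow> ?R")
proof
  assume ?L
  then obtain t where t0: "0 \<le> t" and ex: "\<exists>m. t \<le> (\<Sum>i\<le>m. path_time s \<omega> i)"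
    and at: "path_at s \<omega> t = g" and rw: "path_reward \<rho> s \<omega> t \<le> r" by blast
  define m where "m = path_index s \<omega> t"
  have tm: "t \<le> (\<Sum>i\<le>m. path_time s \<omega> i)"
    unfolding m_def path_index_def by (rule LeastI_ex[OF ex])
  have tj: "(\<Sum>i\<le>j. path_time s \<omega> i) < t" if "j < m" for j
    using not_less_Least[OF that[unfolded m_def path_index_def]] by simp
  have sm: "path_state s \<omega> m = g" using at by (simp add: path_at_def m_def)
  have "acc s \<omega> m + (t - Bs s \<omega> m) * \<rho> g \<le> r"
    using rw sm unfolding path_reward_def acc_def Bs_def m_def[symmetric] Let_def by simp
  then have "(t - Bs s \<omega> m) * \<rho> g \<le> r - acc s \<omega> m" by simp
  then have "t - Bs s \<omega> m \<le> (r - acc s \<omega> m) / \<rho> g" using rho_pos[of g] by (simp add: pos_le_divide_eq)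
  then have tU: "t \<le> Uu r s \<omega> m" using tm by (simp add: Uu_def)
  show ?R
    using sm tU t0 tj by (intro exI[of _ m]) (auto intro: less_le_trans)
next
  assume ?R
  then obtain m where sm: "path_state s \<omega> m = g" and U0: "0 \<le> Uu r s \<omega> m"
    and Uj: "\<And>j. j < m \<Longrightarrow> (\<Sum>i\<le>j. path_time s \<omega> i) < Uu r s \<omega> m" by blast
  define t where "t = Uu r s \<omega> m"
  have tm: "t \<le> (\<Sum>i\<le>m. path_time s \<omega> i)" by (simp add: t_def Uu_def)
  have idx: "path_index s \<omega> t = m"
    unfolding path_index_def
  proof (rule Least_equality)
    show "t \<le> (\<Sum>i\<le>m. path_time s \<omega> i)" by (rule tm)
  next
    fix y assume "t \<le> (\<Sum>i\<le>y. path_time s \<omega> i)"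
    then show "m \<le> y" using Uj[of y] by (force simp: t_def)
  qed
  have "t - Bs s \<omega> m \<le> (r - acc s \<omega> m) / \<rho> g" by (simp add: t_def Uu_def)
  then have "(t - Bs s \<omega> m) * \<rho> g \<le> r - acc s \<omega> m" using rho_pos[of g] by (simp add: pos_le_divide_eq)
  then have rw: "path_reward \<rho> s \<omega> t \<le> r"
    unfolding path_reward_def Let_def idx using sm by (simp add: acc_def Bs_def)
  have at: "path_at s \<omega> t = g" by (simp add: path_at_def idx sm)
  show ?L using U0 tm at rw by (intro exI[of _ t]) (auto simp: t_def)
qed

definition "Orig r s = {\<omega> \<in> space \<Omega>. \<exists>t\<ge>0. (\<exists>m. t \<le> (\<Sum>i\<le>m. path_time s \<omega> i)) \<and> path_at s \<omega> t = g \<and> path_reward \<rho> s \<omega> t \<le> r}"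

lemma meas_Bs[measurable]: "(\<lambda>\<omega>. Bs s \<omega> m) \<in> borel_measurable \<Omega>"
  unfolding Bs_def by measurable

lemma meas_Uu[measurable]: "(\<lambda>\<omega>. Uu r s \<omega> m) \<in> borel_measurable \<Omega>"
  unfolding Uu_def by measurable

lemma sets_Orig: "Orig r s \<in> sets \<Omega>"
proof -
  have "Orig r s = {\<omega> \<in> space \<Omega>. \<exists>m. path_state s \<omega> m = g \<and> 0 \<le> Uu r s \<omega> m \<and> (\<forall>j<m. (\<Sum>i\<le>j. path_time s \<omega> i) < Uu r s \<omega> m)}"
    unfolding Orig_def orig_char ..
  also have "\<dots> \<in> sets \<Omega>" by measurable
  finally show ?thesis .
qed

lemma sum_atMost_eq: "(\<Sum>i\<le>j. path_time s \<omega> i) = Bs s \<omega> (Suc j)"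
  by (simp add: Bs_def lessThan_Suc_atMost)

lemma Orig_AE:
  assumes r: "0 \<le> r" and \<omega>: "\<omega> \<in> Pos"
  shows "\<omega> \<in> Orig r s \<longleftrightarrow> \<omega> \<in> {\<omega>. s = g} \<union> Cl s r"
proof
  assume "\<omega> \<in> Orig r s"
  then obtain m where sm: "path_state s \<omega> m = g" and U0: "0 \<le> Uu r s \<omega> m"
    and Uj: "\<And>j. j < m \<Longrightarrow> (\<Sum>i\<le>j. path_time s \<omega> i) < Uu r s \<omega> m"
    unfolding Orig_def orig_char by blast
  show "\<omega> \<in> {\<omega>. s = g} \<union> Cl s r"
  proof (cases m)
    case 0 then show ?thesis using sm by simp
  next
    case (Suc m')
    have "Bs s \<omega> m < Uu r s \<omega> m" using Uj[of m'] Suc by (simp add: sum_atMost_eq)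
    also have "\<dots> \<le> Bs s \<omega> m + (r - acc s \<omega> m) / \<rho> g" by (simp add: Uu_def)
    finally have "0 < (r - acc s \<omega> m) / \<rho> g" by simp
    then have "acc s \<omega> m < r" using rho_pos[of g] by (simp add: zero_less_divide_iff)
    then show ?thesis using sm by (auto simp: Cl_def)
  qed
next
  have tpos: "\<And>j. 0 < path_time s \<omega> j" using Pos_time[OF \<omega>] by simp
  have Bs0: "0 \<le> Bs s \<omega> m" for m unfolding Bs_def using tpos by (intro sum_nonneg) (auto intro: less_imp_le)
  assume "\<omega> \<in> {\<omega>. s = g} \<union> Cl s r"
  then have "\<exists>m. path_state s \<omega> m = g \<and> 0 \<le> Uu r s \<omega> m \<and> (\<forall>j<m. (\<Sum>i\<le>j. path_time s \<omega> i) < Uu r s \<omega> m)"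
  proof
    assume "\<omega> \<in> {\<omega>. s = g}"
    then have sg: "s = g" by (cases "s = g") auto
    have "0 \<le> Uu r s \<omega> 0" using tpos[of 0] r rho_pos[of g] by (simp add: Uu_def Bs_def)
    then show ?thesis using sg by (intro exI[of _ 0]) simp
  next
    assume "\<omega> \<in> Cl s r"
    then obtain m where sm: "path_state s \<omega> m = g" and am: "acc s \<omega> m < r" by (auto simp: Cl_def)
    have "Bs s \<omega> m < Uu r s \<omega> m"
    proof -
      have "Bs s \<omega> m < (\<Sum>i\<le>m. path_time s \<omega> i)" using tpos[of m] by (simp add: sum_atMost_eq Bs_def)
      moreover have "Bs s \<omega> m < Bs s \<omega> m + (r - acc s \<omega> m) / \<rho> g" using am rho_pos[of g] by simp
      ultimately show ?thesis by (simp add: Uu_def)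
    qed
    moreover have "(\<Sum>i\<le>j. path_time s \<omega> i) \<le> Bs s \<omega> m" if "j < m" for j
      unfolding sum_atMost_eq Bs_def using that tpos
      by (intro sum_mono2) (auto intro: less_imp_le)
    ultimately show ?thesis using sm Bs0[of m] by (intro exI[of _ m]) (auto intro: le_less_trans)
  qed
  then show "\<omega> \<in> Orig r s" unfolding Orig_def orig_char by (simp add: space_Omega)
qed

lemma reach_eq:
  assumes r: "0 \<le> r"
  shows "reach_reward_prob P E \<rho> g r s = (if s = g then 1 else Fm s r)"
proof -
  interpret prob_space \<Omega> by (rule prob_space_Omega)
  have "reach_reward_prob P E \<rho> g r s = measure \<Omega> (Orig r s)"
    by (simp add: reach_reward_prob_def Orig_def)
  also have "\<dots> = measure \<Omega> ({\<omega>. s = g} \<union> Cl s r)"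
  proof (rule measure_eq_AE)
    show "AE \<omega> in \<Omega>. \<omega> \<in> Orig r s \<longleftrightarrow> \<omega> \<in> {\<omega>. s = g} \<union> Cl s r"
      using AE_Pos by eventually_elim (rule Orig_AE[OF r])
    show "Orig r s \<in> sets \<Omega>" by (rule sets_Orig)
    show "{\<omega>. s = g} \<union> Cl s r \<in> sets \<Omega>"
      using sets_Cl sets.top[of \<Omega>] by (cases "s = g") (auto simp: space_Omega)
  qed
  also have "\<dots> = (if s = g then 1 else Fm s r)"
    using prob_space by (cases "s = g") (auto simp: Fm_def space_Omega)
  finally show ?thesis .
qed

end

theorem proposition9:
  fixes P :: "'s::finite \<Rightarrow> 's pmf" and E :: "'s \<Rightarrow> real" and L :: "'s \<Rightarrow> 'l"
    and \<rho> :: "'s \<Rightarrow> real" and g s s' :: 's and \<epsilon> \<delta> r q :: real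
  assumes E_pos: "\<And>p. E p > 0"
    and rho_pos: "\<And>p. \<rho> p > 0"
    and g_absorbing: "P g = return_pmf g"
    and g_unique_label: "\<And>p. L p = L g \<Longrightarrow> p = g"
    and eps: "\<epsilon> \<ge> 0" and delta: "\<delta> \<ge> 0"
    and bisim: "eps_delta_bisimilar P E L \<rho> \<epsilon> \<delta> s s'"
    and r: "r \<ge> 0"
    and q: "q \<ge> Max ((\<lambda>p. E p / \<rho> p) ` UNIV)"
  shows "\<bar>reach_reward_prob P E \<rho> g r s - reach_reward_prob P E \<rho> g r s'\<bar>
           \<le> 1 - exp (- q * r * (exp \<delta> * (\<epsilon> + 1) - 1))"
proof -
  interpret C: ctmc P E \<rho> g by unfold_locales (use E_pos rho_pos in auto)
  from bisim obtain R where bR: "is_eps_delta_bisim P E L \<rho> \<epsilon> \<delta> R" and sR: "(s, s') \<in> R"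
    unfolding eps_delta_bisimilar_def by blast
  have reflR: "refl R" and symR: "sym R"
    and props: "\<And>x y. (x, y) \<in> R \<Longrightarrow> L x = L y \<and> \<rho> x = \<rho> y \<and> \<bar>ln (E x) - ln (E y)\<bar> \<le> \<delta> \<and>
        (\<forall>A. measure_pmf.prob (P x) A \<le> measure_pmf.prob (P y) (R `` A) + \<epsilon>)"
    using bR unfolding is_eps_delta_bisim_def by auto
  define a where "a p = E p / \<rho> p" for p
  have aq: "a p \<le> q" for p
  proof -
    have "a p \<le> Max ((\<lambda>p. E p / \<rho> p) ` UNIV)" unfolding a_def by (rule Max_ge) auto
    then show ?thesis using q by linarith
  qed
  interpret B: ansys_bisim C.Fm P a g q R \<epsilon> \<delta>
  proof unfold_locales
    show "\<And>p v. 0 \<le> C.Fm p v" by (rule C.Fm0)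
    show "\<And>p v. C.Fm p v \<le> 1" by (rule C.Fm1)
    show "\<And>p. mono (C.Fm p)" by (rule C.Fm_mono)
    show "\<And>p v. v \<le> 0 \<Longrightarrow> C.Fm p v = 0" by (rule C.Fm_neg)
    show "\<And>p. 0 < a p" unfolding a_def using E_pos rho_pos by simp
    show "\<And>p. a p \<le> q" by (rule aq)
    show "\<And>p v. p \<noteq> g \<Longrightarrow> 0 \<le> v \<Longrightarrow>
       C.Fm p v = a p * exp (- a p * v) * integral {0..v} (\<lambda>w. exp (a p * w) * (\<Sum>p'\<in>UNIV. pmf (P p) p' * C.Fm p' w))"
      unfolding a_def by (rule C.Fm_rec)
    show "\<And>p. (p, p) \<in> R" using reflR by (auto simp: refl_on_def)
    show "\<And>x y. (x, y) \<in> R \<Longrightarrow> x = g \<longleftrightarrow> y = g"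
    proof -
      fix x y assume "(x, y) \<in> R"
      then have "L x = L y" using props by blast
      then show "x = g \<longleftrightarrow> y = g" using g_unique_label by metis
    qed
    show "\<And>x y. (x, y) \<in> R \<Longrightarrow> a x \<le> exp \<delta> * a y"
    proof -
      fix x y assume xy: "(x, y) \<in> R"
      then have rr: "\<rho> x = \<rho> y" and ll: "\<bar>ln (E x) - ln (E y)\<bar> \<le> \<delta>" using props by blast+
      have "ln (E x) \<le> \<delta> + ln (E y)" using ll by linarith
      then have "exp (ln (E x)) \<le> exp (\<delta> + ln (E y))" by simp
      then have "E x \<le> exp \<delta> * E y" using E_pos[of x] E_pos[of y] by (simp add: exp_add)
      then have "E x / \<rho> x \<le> exp \<delta> * E y / \<rho> x" using rho_pos[of x] by (simp add: divide_right_mono)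
      then show "a x \<le> exp \<delta> * a y" unfolding a_def using rr by simp
    qed
    show "\<And>x y A. (x, y) \<in> R \<Longrightarrow> measure_pmf.prob (P x) A \<le> measure_pmf.prob (P y) (R `` A) + \<epsilon>"
      using props by blast
    show "0 \<le> \<epsilon>" by (rule eps)
    show "0 \<le> \<delta>" by (rule delta)
  qed
  have rs: "reach_reward_prob P E \<rho> g r s = (if s = g then 1 else C.Fm s r)" by (rule C.reach_eq[OF r])
  have rs': "reach_reward_prob P E \<rho> g r s' = (if s' = g then 1 else C.Fm s' r)" by (rule C.reach_eq[OF r])
  have gg: "s = g \<longleftrightarrow> s' = g" by (rule B.Rg[OF sR])
  show ?thesis
  proof (cases "s = g")
    case True
    then have "s' = g" using gg by simp
    moreover have "C.Fm s r - C.Fm s r \<le> 1 - exp (- q * r * (exp \<delta> * (\<epsilon> + 1) - 1))"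
      by (rule B.main_bound[OF B.Rrefl r])
    ultimately show ?thesis using True rs rs' by simp
  next
    case False
    then have "s' \<noteq> g" using gg by simp
    moreover have "C.Fm s r - C.Fm s' r \<le> 1 - exp (- q * r * (exp \<delta> * (\<epsilon> + 1) - 1))"
      by (rule B.main_bound[OF sR r])
    moreover have "C.Fm s' r - C.Fm s r \<le> 1 - exp (- q * r * (exp \<delta> * (\<epsilon> + 1) - 1))"
      by (rule B.main_bound[OF symD[OF symR sR] r])
    ultimately show ?thesis using False rs rs' by (simp add: abs_le_iff)
  qed
qed

end
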